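(* Let $\mathcal A$ be an associative commutative $\mathbb F$-algebra and $\mathcal M$ an $\mathcal A$-module. Take $\mathcal U=\mathcal V=\mathcal M$ and $\varkappa=\mathrm{id}_{\mathfrak D(\mathcal M)}$, and let $d$ be the operator on $\Omega(\mathcal M):=\Omega(\mathcal M,\mathcal M)$ given by $d\omega(\xi_0,\dots,\xi_q)=\frac{1}{q+1}\{\sum_{0\le r\le q}(-1)^r\nabla_{\xi_r}(\omega(\xi_0,\dots,\check\xi_r,\dots,\xi_q))+\sum_{0\le r<s\le q}(-1)^{r+s}\omega([\xi_r,\xi_s],\xi_0,\dots,\check\xi_r,\dots,\check\xi_s,\dots,\xi_q)\}$, where $\xi_r=(\nabla_{\xi_r},X_r)\in\mathfrak D(\mathcal M)$. Then $d\circ d=0$ and the complex $\{\Omega^q(\mathcal M),d\}$ is exact: $\mathrm{Ker}\,d|_{\Omega^q(\mathcal M)}=\mathrm{Im}\,d|_{\Omega^{q-1}(\mathcal M)}$ for all $q\in\mathbb Z$, i.e. $H^q(\mathcal M,\mathcal M)=0$ for all $q$.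
   Context: $\mathbb F\in\{\mathbb R,\mathbb C\}$; $\mathcal A$ is an associative commutative $\mathbb F$-algebra. A differentiation of $\mathcal A$ is an $\mathbb F$-linear $X:\mathcal A\to\mathcal A$ with $X(fg)=Xf\cdot g+f\cdot Xg$; $\mathfrak D(\mathcal A)$ is their Lie algebra under the commutator. For an $\mathcal A$-module $\mathcal M$, a differentiation of $\mathcal M$ is a pair $(\nabla_X,X)$ with $\nabla_X$ an $\mathbb F$-linear endomorphism of $\mathcal M$, $X\in\mathfrak D(\mathcal A)$, and $\nabla_X(f\cdot M)=Xf\cdot M+f\cdot\nabla_XM$; $\mathfrak D(\mathcal M)$ is their set, a Lie algebra under the componentwise commutator $[(\nabla_X,X),(\nabla_Y,Y)]=([\nabla_X,\nabla_Y],[X,Y])$ and an $\mathcal A$-module via $f(\nabla_X,X)=(f\nabla_X,fX)$. $\Omega^q(\mathcal M,\mathcal M)=0$ for $q<0$, $=\mathcal M$ for $q=0$, and for $q>0$ is the $\mathcal A$-module of alternating $\mathcal A$-multilinear maps $\mathfrak D(\mathcal M)^q\to\mathcal M$. *)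

theory Defs
  imports Complex_Main
begin

text \<open>The commutative associative (not necessarily unital) F-algebra A is a type 'a of
class comm_ring together with an F-scalar multiplication sA; the A-module M is a type 'm
of class ab_group_add with an F-scalar multiplication sM and an A-action act.\<close>

definition F_algebra_module ::
  "('k::field \<Rightarrow> 'a::comm_ring \<Rightarrow> 'a) \<Rightarrow> ('k \<Rightarrow> 'm::ab_group_add \<Rightarrow> 'm) \<Rightarrow> ('a \<Rightarrow> 'm \<Rightarrow> 'm) \<Rightarrow> bool" where
  "F_algebra_module sA sM act \<longleftrightarrow>
     vector_space sA \<and> vector_space sM \<and>
     (\<forall>c f g. sA c (f * g) = sA c f * g) \<and>
     (\<forall>c f g. f * sA c g = sA c (f * g)) \<and>
     (\<forall>f m n. act f (m + n) = act f m + act f n) \<and>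
     (\<forall>f g m. act (f + g) m = act f m + act g m) \<and>
     (\<forall>f g m. act (f * g) m = act f (act g m)) \<and>
     (\<forall>c f m. act (sA c f) m = sM c (act f m)) \<and>
     (\<forall>c f m. act f (sM c m) = sM c (act f m))"

definition derivA :: "('k::field \<Rightarrow> 'a::comm_ring \<Rightarrow> 'a) \<Rightarrow> ('a \<Rightarrow> 'a) set" where
  "derivA sA = {X. (\<forall>f g. X (f + g) = X f + X g) \<and> (\<forall>c f. X (sA c f) = sA c (X f)) \<and>
                   (\<forall>f g. X (f * g) = X f * g + f * X g)}"

definition derivM ::
  "('k::field \<Rightarrow> 'a::comm_ring \<Rightarrow> 'a) \<Rightarrow> ('k \<Rightarrow> 'm::ab_group_add \<Rightarrow> 'm) \<Rightarrow> ('a \<Rightarrow> 'm \<Rightarrow> 'm)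
     \<Rightarrow> (('m \<Rightarrow> 'm) \<times> ('a \<Rightarrow> 'a)) set" where
  "derivM sA sM act = {(N, X). (\<forall>m n. N (m + n) = N m + N n) \<and> (\<forall>c m. N (sM c m) = sM c (N m)) \<and>
       X \<in> derivA sA \<and> (\<forall>f m. N (act f m) = act (X f) m + act f (N m))}"

definition brD :: "('m::ab_group_add \<Rightarrow> 'm) \<times> ('a::comm_ring \<Rightarrow> 'a) \<Rightarrow> ('m \<Rightarrow> 'm) \<times> ('a \<Rightarrow> 'a)
     \<Rightarrow> ('m \<Rightarrow> 'm) \<times> ('a \<Rightarrow> 'a)" where
  "brD \<xi> \<eta> = ((\<lambda>m. fst \<xi> (fst \<eta> m) - fst \<eta> (fst \<xi> m)), (\<lambda>f. snd \<xi> (snd \<eta> f) - snd \<eta> (snd \<xi> f)))"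

definition addD :: "('m::ab_group_add \<Rightarrow> 'm) \<times> ('a::comm_ring \<Rightarrow> 'a) \<Rightarrow> ('m \<Rightarrow> 'm) \<times> ('a \<Rightarrow> 'a)
     \<Rightarrow> ('m \<Rightarrow> 'm) \<times> ('a \<Rightarrow> 'a)" where
  "addD \<xi> \<eta> = ((\<lambda>m. fst \<xi> m + fst \<eta> m), (\<lambda>f. snd \<xi> f + snd \<eta> f))"

definition actD :: "('a \<Rightarrow> 'm \<Rightarrow> 'm) \<Rightarrow> 'a::comm_ring \<Rightarrow> ('m::ab_group_add \<Rightarrow> 'm) \<times> ('a \<Rightarrow> 'a)
     \<Rightarrow> ('m \<Rightarrow> 'm) \<times> ('a \<Rightarrow> 'a)" where
  "actD act g \<xi> = ((\<lambda>m. act g (fst \<xi> m)), (\<lambda>f. g * snd \<xi> f))"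

definition smulD :: "('k::field \<Rightarrow> 'a::comm_ring \<Rightarrow> 'a) \<Rightarrow> ('k \<Rightarrow> 'm::ab_group_add \<Rightarrow> 'm) \<Rightarrow> 'k
     \<Rightarrow> ('m \<Rightarrow> 'm) \<times> ('a \<Rightarrow> 'a) \<Rightarrow> ('m \<Rightarrow> 'm) \<times> ('a \<Rightarrow> 'a)" where
  "smulD sA sM c \<xi> = ((\<lambda>m. sM c (fst \<xi> m)), (\<lambda>f. sA c (snd \<xi> f)))"

text \<open>A form is a function on lists of elements of D(M); a q-form is normalised to vanish
on all lists that are not in D(M)^q.  Omega q is the set of alternating (F- and)
A-multilinear q-forms; Omega 0 = M (value at the empty list); Omega q = 0 for q < 0.\<close>
definition Omega ::
  "('k::field \<Rightarrow> 'a::comm_ring \<Rightarrow> 'a) \<Rightarrow> ('k \<Rightarrow> 'm::ab_group_add \<Rightarrow> 'm) \<Rightarrow> ('a \<Rightarrow> 'm \<Rightarrow> 'm) \<Rightarrow> int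
     \<Rightarrow> ((('m \<Rightarrow> 'm) \<times> ('a \<Rightarrow> 'a)) list \<Rightarrow> 'm) set" where
  "Omega sA sM act q =
    (let D = derivM sA sM act in
     if q < 0 then {(\<lambda>_. 0)} else
     {\<omega>. (\<forall>xs. \<not> (length xs = nat q \<and> set xs \<subseteq> D) \<longrightarrow> \<omega> xs = 0) \<and>
          (\<forall>xs ys \<xi> \<eta>. length xs + length ys + 1 = nat q \<and> set xs \<subseteq> D \<and> set ys \<subseteq> D \<and> \<xi> \<in> D \<and> \<eta> \<in> D \<longrightarrow>
              \<omega> (xs @ addD \<xi> \<eta> # ys) = \<omega> (xs @ \<xi> # ys) + \<omega> (xs @ \<eta> # ys)) \<and>
          (\<forall>xs ys \<xi> g. length xs + length ys + 1 = nat q \<and> set xs \<subseteq> D \<and> set ys \<subseteq> D \<and> \<xi> \<in> D \<longrightarrow>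
              \<omega> (xs @ actD act g \<xi> # ys) = act g (\<omega> (xs @ \<xi> # ys))) \<and>
          (\<forall>xs ys \<xi> c. length xs + length ys + 1 = nat q \<and> set xs \<subseteq> D \<and> set ys \<subseteq> D \<and> \<xi> \<in> D \<longrightarrow>
              \<omega> (xs @ smulD sA sM c \<xi> # ys) = sM c (\<omega> (xs @ \<xi> # ys))) \<and>
          (\<forall>xs i j. length xs = nat q \<and> set xs \<subseteq> D \<and> i < j \<and> j < length xs \<and> xs ! i = xs ! j \<longrightarrow>
              \<omega> xs = 0)})"

definition omit :: "nat set \<Rightarrow> 'b list \<Rightarrow> 'b list" where
  "omit I xs = map (\<lambda>i. xs ! i) (filter (\<lambda>i. i \<notin> I) [0..<length xs])"

definition dOp ::
  "('k::field \<Rightarrow> 'a::comm_ring \<Rightarrow> 'a) \<Rightarrow> ('k \<Rightarrow> 'm::ab_group_add \<Rightarrow> 'm) \<Rightarrow> ('a \<Rightarrow> 'm \<Rightarrow> 'm)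
     \<Rightarrow> ((('m \<Rightarrow> 'm) \<times> ('a \<Rightarrow> 'a)) list \<Rightarrow> 'm) \<Rightarrow> ((('m \<Rightarrow> 'm) \<times> ('a \<Rightarrow> 'a)) list \<Rightarrow> 'm)" where
  "dOp sA sM act \<omega> xs =
    (if xs \<noteq> [] \<and> set xs \<subseteq> derivM sA sM act then
       sM (1 / of_nat (length xs))
         ((\<Sum>r<length xs. sM ((-1) ^ r) (fst (xs ! r) (\<omega> (omit {r} xs)))) +
          (\<Sum>s<length xs. \<Sum>r<s. sM ((-1) ^ (r + s)) (\<omega> (brD (xs ! r) (xs ! s) # omit {r, s} xs))))
     else 0)"

end

theory Submission
  imports Defs
begin



locale AM =
  fixes sA :: "'k::field_char_0 \<Rightarrow> 'a::comm_ring \<Rightarrow> 'a"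
    and sM :: "'k \<Rightarrow> 'm::ab_group_add \<Rightarrow> 'm"
    and act :: "'a \<Rightarrow> 'm \<Rightarrow> 'm"
  assumes fam: "F_algebra_module sA sM act"
begin

lemma vsM: "vector_space sM" and vsA: "vector_space sA"
  using fam unfolding F_algebra_module_def by auto

sublocale M: vector_space sM by (rule vsM)
sublocale A: vector_space sA by (rule vsA)

lemma act_add2: "act f (m + n) = act f m + act f n"
  and act_add1: "act (f + g) m = act f m + act g m"
  and act_mult: "act (f * g) m = act f (act g m)"
  and act_sA: "act (sA c f) m = sM c (act f m)"
  and act_sM: "act f (sM c m) = sM c (act f m)"
  and sA_mult1: "sA c (f * g) = sA c f * g"
  and sA_mult2: "f * sA c g = sA c (f * g)"
  using fam unfolding F_algebra_module_def by auto

lemma act_zero2[simp]: "act f 0 = 0"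
  using act_add2[of f 0 0] by simp
lemma act_zero1[simp]: "act 0 m = 0"
  using act_add1[of 0 0 m] by simp
lemma act_minus2: "act f (- m) = - act f m"
  using act_add2[of f m "-m"] by (simp add: add.commute eq_neg_iff_add_eq_0)
lemma act_diff2: "act f (m - n) = act f m - act f n"
  using act_add2[of f "m - n" n] by (simp add: eq_diff_eq)
lemma act_minus1: "act (- f) m = - act f m"
  using act_add1[of f "-f" m] by (simp add: add.commute eq_neg_iff_add_eq_0)
lemma act_diff1: "act (f - g) m = act f m - act g m"
  using act_add1[of "f - g" g m] by (simp add: eq_diff_eq)
lemma act_sum2: "act f (sum g S) = (\<Sum>i\<in>S. act f (g i))"
  by (induct S rule: infinite_finite_induct) (auto simp: act_add2)

abbreviation D where "D \<equiv> derivM sA sM act"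

lemma derivA_props:
  assumes "X \<in> derivA sA"
  shows "X (f + g) = X f + X g" "X (sA c f) = sA c (X f)" "X (f * g) = X f * g + f * X g"
  using assms unfolding derivA_def by auto

lemma derivA_zero: "X \<in> derivA sA \<Longrightarrow> X 0 = 0"
  using derivA_props(1)[of X 0 0] by simp
lemma derivA_diff: "X \<in> derivA sA \<Longrightarrow> X (f - g) = X f - X g"
  using derivA_props(1)[of X "f - g" g] by (simp add: eq_diff_eq)

lemma D_props:
  assumes "\<xi> \<in> D"
  shows "fst \<xi> (m + n) = fst \<xi> m + fst \<xi> n" "fst \<xi> (sM c m) = sM c (fst \<xi> m)"
    "snd \<xi> \<in> derivA sA" "fst \<xi> (act f m) = act (snd \<xi> f) m + act f (fst \<xi> m)"
  using assms unfolding derivM_def by auto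

lemma D_zero[simp]: "\<xi> \<in> D \<Longrightarrow> fst \<xi> 0 = 0"
  using D_props(1)[of \<xi> 0 0] by simp
lemma D_minus: "\<xi> \<in> D \<Longrightarrow> fst \<xi> (- m) = - fst \<xi> m"
  using D_props(1)[of \<xi> m "-m"] by (simp add: add.commute eq_neg_iff_add_eq_0)
lemma D_diff: "\<xi> \<in> D \<Longrightarrow> fst \<xi> (m - n) = fst \<xi> m - fst \<xi> n"
  using D_props(1)[of \<xi> "m - n" n] by (simp add: eq_diff_eq)
lemma D_sum: "\<xi> \<in> D \<Longrightarrow> fst \<xi> (sum g S) = (\<Sum>i\<in>S. fst \<xi> (g i))"
  by (induct S rule: infinite_finite_induct) (auto simp: D_props(1))

lemma derivA_I:
  assumes "\<And>f g. X (f + g) = X f + X g" "\<And>c f. X (sA c f) = sA c (X f)"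
    "\<And>f g. X (f * g) = X f * g + f * X g"
  shows "X \<in> derivA sA" using assms unfolding derivA_def by auto

lemma derivM_I:
  assumes "\<And>m n. N (m + n) = N m + N n" "\<And>c m. N (sM c m) = sM c (N m)"
    "X \<in> derivA sA" "\<And>f m. N (act f m) = act (X f) m + act f (N m)"
  shows "(N, X) \<in> D" using assms unfolding derivM_def by auto

lemma brD_D: assumes "\<xi> \<in> D" "\<eta> \<in> D" shows "brD \<xi> \<eta> \<in> D"
proof -
  obtain N1 X1 where 1: "\<xi> = (N1, X1)" by fastforce
  obtain N2 X2 where 2: "\<eta> = (N2, X2)" by fastforce
  have a1: "N1 (m + n) = N1 m + N1 n" "N1 (sM c m) = sM c (N1 m)" "X1 \<in> derivA sA"
    "N1 (act f m) = act (X1 f) m + act f (N1 m)" for m n c f using D_props[OF assms(1)] 1 by auto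
  have a2: "N2 (m + n) = N2 m + N2 n" "N2 (sM c m) = sM c (N2 m)" "X2 \<in> derivA sA"
    "N2 (act f m) = act (X2 f) m + act f (N2 m)" for m n c f using D_props[OF assms(2)] 2 by auto
  note x1 = derivA_props[OF a1(3)] and x2 = derivA_props[OF a2(3)]
  show ?thesis unfolding 1 2 brD_def fst_conv snd_conv
  proof (rule derivM_I)
    have d1: "N1 (m - n) = N1 m - N1 n" "N2 (m - n) = N2 m - N2 n" for m n
      using D_diff[OF assms(1)] D_diff[OF assms(2)] 1 2 by auto
    show "N1 (N2 (m + n)) - N2 (N1 (m + n)) = N1 (N2 m) - N2 (N1 m) + (N1 (N2 n) - N2 (N1 n))" for m n
      by (simp add: a1 a2)
    show "N1 (N2 (sM c m)) - N2 (N1 (sM c m)) = sM c (N1 (N2 m) - N2 (N1 m))" for c m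
      by (simp add: a1 a2 M.scale_right_diff_distrib)
    show "N1 (N2 (act f m)) - N2 (N1 (act f m)) = act (X1 (X2 f) - X2 (X1 f)) m + act f (N1 (N2 m) - N2 (N1 m))" for f m
      by (simp add: a1 a2 act_diff1 act_diff2)
    have d2: "X1 (f - g) = X1 f - X1 g" "X2 (f - g) = X2 f - X2 g" for f g
      using derivA_diff a1(3) a2(3) by auto
    show "(\<lambda>f. X1 (X2 f) - X2 (X1 f)) \<in> derivA sA"
    proof (rule derivA_I)
      show "X1 (X2 (f + g)) - X2 (X1 (f + g)) = X1 (X2 f) - X2 (X1 f) + (X1 (X2 g) - X2 (X1 g))" for f g
        by (simp add: x1 x2)
      show "X1 (X2 (sA c f)) - X2 (X1 (sA c f)) = sA c (X1 (X2 f) - X2 (X1 f))" for c f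
        by (simp add: x1 x2 A.scale_right_diff_distrib)
      show "X1 (X2 (f * g)) - X2 (X1 (f * g)) = (X1 (X2 f) - X2 (X1 f)) * g + f * (X1 (X2 g) - X2 (X1 g))" for f g
        by (simp add: x1 x2 algebra_simps)
    qed
  qed
qed


lemma addD_D: assumes "a \<in> D" "b \<in> D" shows "addD a b \<in> D"
proof -
  note a = D_props[OF assms(1)] and b = D_props[OF assms(2)]
  note xa = derivA_props[OF a(3)] and xb = derivA_props[OF b(3)]
  show ?thesis unfolding addD_def
  proof (rule derivM_I)
    show "(\<lambda>f. snd a f + snd b f) \<in> derivA sA"
      by (rule derivA_I) (simp_all add: xa xb M.scale_right_distrib A.scale_right_distrib algebra_simps)
  qed (simp_all add: a b M.scale_right_distrib act_add1 act_add2 algebra_simps)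
qed

lemma actD_D: assumes "a \<in> D" shows "actD act g a \<in> D"
proof -
  note a = D_props[OF assms(1)]
  note xa = derivA_props[OF a(3)]
  show ?thesis unfolding actD_def
  proof (rule derivM_I)
    show "(\<lambda>f. g * snd a f) \<in> derivA sA"
      by (rule derivA_I) (simp_all add: xa sA_mult2 algebra_simps)
    show "act g (fst a (act f m)) = act (g * snd a f) m + act f (act g (fst a m))" for f m
      by (simp add: a act_add2 act_mult[symmetric] mult.commute)
  qed (simp_all add: a act_add2 act_sM)
qed

lemma smulD_D: assumes "a \<in> D" shows "smulD sA sM c a \<in> D"
proof -
  note a = D_props[OF assms(1)]
  note xa = derivA_props[OF a(3)]
  show ?thesis unfolding smulD_def
  proof (rule derivM_I)
    show "(\<lambda>f. sA c (snd a f)) \<in> derivA sA"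
      by (rule derivA_I) (simp_all add: xa sA_mult1 sA_mult2 A.scale_right_distrib A.scale_left_commute)
  qed (simp_all add: a M.scale_right_distrib act_sA act_sM M.scale_left_commute)
qed

definition Z0 :: "('m \<Rightarrow> 'm) \<times> ('a \<Rightarrow> 'a)" where "Z0 = ((\<lambda>m. 0), (\<lambda>f. 0))"
definition E :: "('m \<Rightarrow> 'm) \<times> ('a \<Rightarrow> 'a)" where "E = ((\<lambda>m. m), (\<lambda>f. 0))"

lemma Z0_D: "Z0 \<in> D" unfolding Z0_def
  by (rule derivM_I) (auto intro!: derivA_I)
lemma E_D: "E \<in> D" unfolding E_def
  by (rule derivM_I) (auto intro!: derivA_I)

lemma brD_addD_left: assumes "z \<in> D" shows "brD (addD a b) z = addD (brD a z) (brD b z)"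
  unfolding brD_def addD_def by (auto simp: fun_eq_iff D_props(1)[OF assms] derivA_props(1)[OF D_props(3)[OF assms]])

lemma brD_addD_right: assumes "x \<in> D" shows "brD x (addD a b) = addD (brD x a) (brD x b)"
  using D_props(1)[OF assms] derivA_props(1)[OF D_props(3)[OF assms]]
  unfolding brD_def addD_def by (auto simp: fun_eq_iff)

lemma brD_actD_right: assumes "x \<in> D" "z \<in> D"
  shows "brD x (actD act g z) = addD (actD act g (brD x z)) (actD act (snd x g) z)"
  using D_props(4)[OF assms(1)] derivA_props(3)[OF D_props(3)[OF assms(1)]]
  unfolding brD_def addD_def actD_def by (auto simp: fun_eq_iff act_diff2 algebra_simps)

lemma brD_smulD_right: assumes "x \<in> D" "z \<in> D"
  shows "brD x (smulD sA sM c z) = smulD sA sM c (brD x z)"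
  using D_props(2)[OF assms(1)] derivA_props(2)[OF D_props(3)[OF assms(1)]]
  unfolding brD_def smulD_def by (auto simp: fun_eq_iff M.scale_right_diff_distrib A.scale_right_diff_distrib)

lemma brD_anti: "addD (brD a b) (brD b a) = Z0"
  unfolding brD_def addD_def Z0_def by (auto simp: fun_eq_iff)

lemma jacobi: assumes "x \<in> D" "y \<in> D" "z \<in> D"
  shows "brD x (brD y z) = addD (brD y (brD x z)) (brD (brD x y) z)"
  unfolding brD_def addD_def by (auto simp: fun_eq_iff D_diff[OF assms(1)] D_diff[OF assms(2)] D_diff[OF assms(3)]
    derivA_diff[OF D_props(3)[OF assms(1)]] derivA_diff[OF D_props(3)[OF assms(2)]] derivA_diff[OF D_props(3)[OF assms(3)]])

lemma brD_E: assumes "z \<in> D" shows "brD E z = Z0"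
  using derivA_zero[OF D_props(3)[OF assms]] unfolding brD_def E_def Z0_def by (auto simp: fun_eq_iff)

end



lemma omit_Cons: "omit I (x # xs) = (if 0 \<in> I then omit {i. Suc i \<in> I} xs else x # omit {i. Suc i \<in> I} xs)"
proof -
  have "[0..<length (x # xs)] = 0 # map Suc [0..<length xs]"
    by (simp add: map_Suc_upt upt_conv_Cons del: upt_Suc)
  then show ?thesis unfolding omit_def by (simp add: filter_map comp_def)
qed

lemma omit_empty[simp]: "omit {} xs = xs"
  unfolding omit_def by (simp add: map_nth)

lemma omit_0[simp]: "omit {0} (x # xs) = xs"
  by (simp add: omit_Cons)
lemma omit_Suc[simp]: "omit {Suc r} (x # xs) = x # omit {r} xs"
  by (simp add: omit_Cons)
lemma omit_0_Suc[simp]: "omit {0, Suc s} (x # xs) = omit {s} xs"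
  by (simp add: omit_Cons)
lemma omit_Suc_Suc[simp]: "omit {Suc r, Suc s} (x # xs) = x # omit {r, s} xs"
proof -
  have "{i. Suc i \<in> {Suc r, Suc s}} = {r, s}" by auto
  then show ?thesis by (simp add: omit_Cons)
qed

lemma set_omit: "set (omit I xs) \<subseteq> set xs"
  unfolding omit_def by auto

lemma length_omit: "length (omit I xs) = card ({..<length xs} - I)"
  unfolding omit_def by (simp add: length_filter_conv_card) (rule arg_cong[where f=card], auto)

lemma length_omit1: "r < length xs \<Longrightarrow> length (omit {r} xs) = length xs - 1"
  by (simp add: length_omit)
lemma length_omit2: "r < s \<Longrightarrow> s < length xs \<Longrightarrow> length (omit {r, s} xs) = length xs - 2"
  by (simp add: length_omit card_Diff_subset)

lemma sum_upd_split:
  "(\<Sum>s<length (xs @ z # ys). F ((xs @ z # ys)[s := t ((xs @ z # ys) ! s)])) =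
   (\<Sum>s<length xs. F (xs[s := t (xs ! s)] @ z # ys)) + F (xs @ t z # ys) + (\<Sum>s<length ys. F (xs @ z # ys[s := t (ys ! s)]))"
proof (induction xs arbitrary: F)
  case Nil
  show ?case by (simp add: sum.lessThan_Suc_shift del: sum.lessThan_Suc)
next
  case (Cons w xs)
  have "(\<Sum>s<length ((w # xs) @ z # ys). F (((w # xs) @ z # ys)[s := t (((w # xs) @ z # ys) ! s)]))
     = F (t w # xs @ z # ys) + (\<Sum>s<length (xs @ z # ys). F (w # (xs @ z # ys)[s := t ((xs @ z # ys) ! s)]))"
    by (simp add: sum.lessThan_Suc_shift del: sum.lessThan_Suc)
  also have "\<dots> = F (t w # xs @ z # ys) + ((\<Sum>s<length xs. F (w # xs[s := t (xs ! s)] @ z # ys)) + F (w # xs @ t z # ys) + (\<Sum>s<length ys. F (w # xs @ z # ys[s := t (ys ! s)])))"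
    using Cons.IH[of "\<lambda>l. F (w # l)"] by simp
  also have "\<dots> = (\<Sum>s<length (w # xs). F ((w # xs)[s := t ((w # xs) ! s)] @ z # ys)) + F ((w # xs) @ t z # ys) + (\<Sum>s<length ys. F ((w # xs) @ z # ys[s := t (ys ! s)]))"
    by (simp add: sum.lessThan_Suc_shift add.assoc del: sum.lessThan_Suc)
  finally show ?case .
qed




context AM begin


definition Van :: "nat \<Rightarrow> ((('m \<Rightarrow> 'm) \<times> ('a \<Rightarrow> 'a)) list \<Rightarrow> 'm) \<Rightarrow> bool" where
  "Van n \<theta> \<longleftrightarrow> (\<forall>xs. \<not> (length xs = n \<and> set xs \<subseteq> D) \<longrightarrow> \<theta> xs = 0)"
definition Ad :: "((('m \<Rightarrow> 'm) \<times> ('a \<Rightarrow> 'a)) list \<Rightarrow> 'm) \<Rightarrow> bool" where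
  "Ad \<theta> \<longleftrightarrow> (\<forall>xs ys a b. set xs \<subseteq> D \<longrightarrow> set ys \<subseteq> D \<longrightarrow> a \<in> D \<longrightarrow> b \<in> D \<longrightarrow>
      \<theta> (xs @ addD a b # ys) = \<theta> (xs @ a # ys) + \<theta> (xs @ b # ys))"
definition Sw :: "((('m \<Rightarrow> 'm) \<times> ('a \<Rightarrow> 'a)) list \<Rightarrow> 'm) \<Rightarrow> bool" where
  "Sw \<theta> \<longleftrightarrow> (\<forall>xs ys a b. set xs \<subseteq> D \<longrightarrow> set ys \<subseteq> D \<longrightarrow> a \<in> D \<longrightarrow> b \<in> D \<longrightarrow>
      \<theta> (xs @ a # b # ys) = - \<theta> (xs @ b # a # ys))"
definition Al :: "((('m \<Rightarrow> 'm) \<times> ('a \<Rightarrow> 'a)) list \<Rightarrow> 'm) \<Rightarrow> bool" where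
  "Al \<theta> \<longleftrightarrow> (\<forall>xs ys a g. set xs \<subseteq> D \<longrightarrow> set ys \<subseteq> D \<longrightarrow> a \<in> D \<longrightarrow>
      \<theta> (xs @ actD act g a # ys) = act g (\<theta> (xs @ a # ys)))"
definition Fl :: "((('m \<Rightarrow> 'm) \<times> ('a \<Rightarrow> 'a)) list \<Rightarrow> 'm) \<Rightarrow> bool" where
  "Fl \<theta> \<longleftrightarrow> (\<forall>xs ys a c. set xs \<subseteq> D \<longrightarrow> set ys \<subseteq> D \<longrightarrow> a \<in> D \<longrightarrow>
      \<theta> (xs @ smulD sA sM c a # ys) = sM c (\<theta> (xs @ a # ys)))"

definition ix where "ix x \<theta> = (\<lambda>ys. \<theta> (x # ys))"
definition Lx where "Lx x \<theta> = (\<lambda>ys. if set ys \<subseteq> D then fst x (\<theta> ys) - (\<Sum>s<length ys. \<theta> (ys[s := brD x (ys ! s)])) else 0)"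

lemma VanD: "Van n \<theta> \<Longrightarrow> \<not> (length xs = n \<and> set xs \<subseteq> D) \<Longrightarrow> \<theta> xs = 0"
  unfolding Van_def by blast
lemma AdD: "Ad \<theta> \<Longrightarrow> set xs \<subseteq> D \<Longrightarrow> set ys \<subseteq> D \<Longrightarrow> a \<in> D \<Longrightarrow> b \<in> D \<Longrightarrow>
      \<theta> (xs @ addD a b # ys) = \<theta> (xs @ a # ys) + \<theta> (xs @ b # ys)"
  unfolding Ad_def by blast
lemma SwD: "Sw \<theta> \<Longrightarrow> set xs \<subseteq> D \<Longrightarrow> set ys \<subseteq> D \<Longrightarrow> a \<in> D \<Longrightarrow> b \<in> D \<Longrightarrow>
      \<theta> (xs @ a # b # ys) = - \<theta> (xs @ b # a # ys)"
  unfolding Sw_def by blast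
lemma AlD: "Al \<theta> \<Longrightarrow> set xs \<subseteq> D \<Longrightarrow> set ys \<subseteq> D \<Longrightarrow> a \<in> D \<Longrightarrow>
      \<theta> (xs @ actD act g a # ys) = act g (\<theta> (xs @ a # ys))"
  unfolding Al_def by blast
lemma FlD: "Fl \<theta> \<Longrightarrow> set xs \<subseteq> D \<Longrightarrow> set ys \<subseteq> D \<Longrightarrow> a \<in> D \<Longrightarrow>
      \<theta> (xs @ smulD sA sM c a # ys) = sM c (\<theta> (xs @ a # ys))"
  unfolding Fl_def by blast

lemma Ad_Z0: assumes "Ad \<theta>" "set xs \<subseteq> D" "set ys \<subseteq> D" shows "\<theta> (xs @ Z0 # ys) = 0"
proof -
  have "addD Z0 Z0 = Z0" unfolding addD_def Z0_def by simp
  then show ?thesis using AdD[OF assms(1-3) Z0_D Z0_D] by simp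
qed

lemma sgn_Suc[simp]: "sM ((-1) ^ Suc r) v = - sM ((-1) ^ r) v"
  by simp

lemma upd_D: "set ys \<subseteq> D \<Longrightarrow> x \<in> D \<Longrightarrow> set (ys[s := brD x (ys ! s)]) \<subseteq> D"
proof -
  assume a: "set ys \<subseteq> D" "x \<in> D"
  show ?thesis
  proof (cases "s < length ys")
    case True
    then have "brD x (ys ! s) \<in> D" using a brD_D nth_mem by blast
    then show ?thesis using a set_update_subset_insert by (metis insert_subset subset_trans)
  qed (simp add: a list_update_beyond)
qed

lemma ix_Van: "Van (Suc n) \<theta> \<Longrightarrow> Van n (ix x \<theta>)"
  unfolding Van_def ix_def by auto
lemma ix_zero: "Van 0 \<theta> \<Longrightarrow> ix x \<theta> = (\<lambda>_. 0)"
  unfolding Van_def ix_def by auto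
lemma ix_Ad: "x \<in> D \<Longrightarrow> Ad \<theta> \<Longrightarrow> Ad (ix x \<theta>)"
  unfolding Ad_def ix_def by (metis Cons_eq_appendI insert_subset list.simps(15))
lemma ix_Sw: "x \<in> D \<Longrightarrow> Sw \<theta> \<Longrightarrow> Sw (ix x \<theta>)"
  unfolding Sw_def ix_def by (metis Cons_eq_appendI insert_subset list.simps(15))
lemma ix_Al: "x \<in> D \<Longrightarrow> Al \<theta> \<Longrightarrow> Al (ix x \<theta>)"
  unfolding Al_def ix_def by (metis Cons_eq_appendI insert_subset list.simps(15))
lemma ix_Fl: "x \<in> D \<Longrightarrow> Fl \<theta> \<Longrightarrow> Fl (ix x \<theta>)"
  unfolding Fl_def ix_def by (metis Cons_eq_appendI insert_subset list.simps(15))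

lemma Lx_Van: assumes "x \<in> D" "Van n \<theta>" shows "Van n (Lx x \<theta>)"
  unfolding Van_def Lx_def
proof (intro allI impI)
  fix ys assume h: "\<not> (length ys = n \<and> set ys \<subseteq> D)"
  show "(if set ys \<subseteq> D then fst x (\<theta> ys) - (\<Sum>s<length ys. \<theta> (ys[s := brD x (ys ! s)])) else 0) = 0"
  proof (cases "set ys \<subseteq> D")
    case True
    then have "length ys \<noteq> n" using h by auto
    then show ?thesis using assms VanD[OF assms(2)] by auto
  qed simp
qed

lemma Lx_zero: "x \<in> D \<Longrightarrow> Lx x (\<lambda>_. 0) = (\<lambda>_. 0)" unfolding Lx_def by (simp add: fun_eq_iff)

lemma Lx_diff: assumes "x \<in> D" shows "Lx x (\<lambda>ys. f ys - g ys) = (\<lambda>ys. Lx x f ys - Lx x g ys)"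
  unfolding Lx_def by (auto simp: fun_eq_iff D_diff[OF assms] sum_subtractf)

lemma Lx_split:
  assumes "set xs \<subseteq> D" "set ys \<subseteq> D" "z \<in> D"
  shows "Lx x \<theta> (xs @ z # ys) = fst x (\<theta> (xs @ z # ys)) -
     ((\<Sum>s<length xs. \<theta> (xs[s := brD x (xs ! s)] @ z # ys)) + \<theta> (xs @ brD x z # ys) +
      (\<Sum>s<length ys. \<theta> (xs @ z # ys[s := brD x (ys ! s)])))"
proof -
  have "Lx x \<theta> (xs @ z # ys) = fst x (\<theta> (xs @ z # ys)) - (\<Sum>s<length (xs @ z # ys). \<theta> ((xs @ z # ys)[s := brD x ((xs @ z # ys) ! s)]))"
    using assms unfolding Lx_def by simp
  then show ?thesis by (simp only: sum_upd_split)
qed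

end



context AM begin

lemma upd_D': "set ys \<subseteq> D \<Longrightarrow> x \<in> D \<Longrightarrow> s < length ys \<Longrightarrow> set (ys[s := brD x (ys ! s)]) \<subseteq> D"
  using upd_D by blast

lemma Lx_Ad: assumes x: "x \<in> D" and A: "Ad \<theta>" shows "Ad (Lx x \<theta>)"
  unfolding Ad_def
proof (intro allI impI)
  fix xs ys a b assume xs: "set xs \<subseteq> D" and ys: "set ys \<subseteq> D" and a: "a \<in> D" and b: "b \<in> D"
  have ab: "addD a b \<in> D" using addD_D a b by blast
  have xa: "brD x a \<in> D" "brD x b \<in> D" using brD_D x a b by auto
  have 1: "\<theta> (xs[s := brD x (xs ! s)] @ addD a b # ys) = \<theta> (xs[s := brD x (xs ! s)] @ a # ys) + \<theta> (xs[s := brD x (xs ! s)] @ b # ys)" for s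
    using AdD[OF A upd_D[OF xs x] ys a b] .
  have 2: "\<theta> (xs @ addD a b # ys[s := brD x (ys ! s)]) = \<theta> (xs @ a # ys[s := brD x (ys ! s)]) + \<theta> (xs @ b # ys[s := brD x (ys ! s)])" for s
    using AdD[OF A xs upd_D[OF ys x] a b] .
  have 3: "\<theta> (xs @ brD x (addD a b) # ys) = \<theta> (xs @ brD x a # ys) + \<theta> (xs @ brD x b # ys)"
    using AdD[OF A xs ys xa] brD_addD_right[OF x] by simp
  show "Lx x \<theta> (xs @ addD a b # ys) = Lx x \<theta> (xs @ a # ys) + Lx x \<theta> (xs @ b # ys)"
    unfolding Lx_split[OF xs ys ab] Lx_split[OF xs ys a] Lx_split[OF xs ys b]
    by (simp add: 1 2 3 AdD[OF A xs ys a b] D_props(1)[OF x] sum.distrib algebra_simps)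
qed

lemma Lx_Sw: assumes x: "x \<in> D" and S: "Sw \<theta>" shows "Sw (Lx x \<theta>)"
  unfolding Sw_def
proof (intro allI impI)
  fix xs ys a b assume xs: "set xs \<subseteq> D" and ys: "set ys \<subseteq> D" and a: "a \<in> D" and b: "b \<in> D"
  have xa: "brD x a \<in> D" "brD x b \<in> D" using brD_D x a b by auto
  have exp: "Lx x \<theta> (xs @ c # d # ys) = fst x (\<theta> (xs @ c # d # ys)) -
     ((\<Sum>s<length xs. \<theta> (xs[s := brD x (xs ! s)] @ c # d # ys)) + \<theta> (xs @ brD x c # d # ys) +
      (\<theta> (xs @ c # brD x d # ys) + (\<Sum>s<length ys. \<theta> (xs @ c # d # ys[s := brD x (ys ! s)]))))"
    if "c \<in> D" "d \<in> D" for c d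
    using Lx_split[OF xs _ that(1), of "d # ys" x \<theta>] that ys
    by (simp add: sum.lessThan_Suc_shift del: sum.lessThan_Suc)
  have 1: "\<theta> (xs[s := brD x (xs ! s)] @ a # b # ys) = - \<theta> (xs[s := brD x (xs ! s)] @ b # a # ys)" for s
    using SwD[OF S upd_D[OF xs x] ys a b] .
  have 2: "\<theta> (xs @ a # b # ys[s := brD x (ys ! s)]) = - \<theta> (xs @ b # a # ys[s := brD x (ys ! s)])" for s
    using SwD[OF S xs upd_D[OF ys x] a b] .
  have 3: "\<theta> (xs @ brD x a # b # ys) = - \<theta> (xs @ b # brD x a # ys)"
    using SwD[OF S xs ys xa(1) b] .
  have 4: "\<theta> (xs @ a # brD x b # ys) = - \<theta> (xs @ brD x b # a # ys)"
    using SwD[OF S xs ys a xa(2)] .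
  show "Lx x \<theta> (xs @ a # b # ys) = - Lx x \<theta> (xs @ b # a # ys)"
    unfolding exp[OF a b] exp[OF b a]
    by (simp add: 1 2 3 4 SwD[OF S xs ys a b] D_minus[OF x] sum_negf algebra_simps)
qed

lemma Lx_Al: assumes x: "x \<in> D" and A: "Ad \<theta>" and L: "Al \<theta>" shows "Al (Lx x \<theta>)"
  unfolding Al_def
proof (intro allI impI)
  fix xs ys a g assume xs: "set xs \<subseteq> D" and ys: "set ys \<subseteq> D" and a: "a \<in> D"
  have ga: "actD act g a \<in> D" using actD_D a by blast
  have xa: "brD x a \<in> D" using brD_D x a by auto
  have 1: "\<theta> (xs[s := brD x (xs ! s)] @ actD act g a # ys) = act g (\<theta> (xs[s := brD x (xs ! s)] @ a # ys))" for s
    using AlD[OF L upd_D[OF xs x] ys a] .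
  have 2: "\<theta> (xs @ actD act g a # ys[s := brD x (ys ! s)]) = act g (\<theta> (xs @ a # ys[s := brD x (ys ! s)]))" for s
    using AlD[OF L xs upd_D[OF ys x] a] .
  have 3: "\<theta> (xs @ brD x (actD act g a) # ys) = act g (\<theta> (xs @ brD x a # ys)) + act (snd x g) (\<theta> (xs @ a # ys))"
    using AdD[OF A xs ys actD_D[OF xa] actD_D[OF a]] brD_actD_right[OF x a] AlD[OF L xs ys xa] AlD[OF L xs ys a] by simp
  show "Lx x \<theta> (xs @ actD act g a # ys) = act g (Lx x \<theta> (xs @ a # ys))"
    unfolding Lx_split[OF xs ys ga] Lx_split[OF xs ys a]
    by (simp add: 1 2 3 AlD[OF L xs ys a] D_props(4)[OF x] act_sum2 act_diff2 act_add2 algebra_simps)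
qed

lemma Lx_Fl: assumes x: "x \<in> D" and L: "Fl \<theta>" shows "Fl (Lx x \<theta>)"
  unfolding Fl_def
proof (intro allI impI)
  fix xs ys a c assume xs: "set xs \<subseteq> D" and ys: "set ys \<subseteq> D" and a: "a \<in> D"
  have ga: "smulD sA sM c a \<in> D" using smulD_D a by blast
  have xa: "brD x a \<in> D" using brD_D x a by auto
  have 1: "\<theta> (xs[s := brD x (xs ! s)] @ smulD sA sM c a # ys) = sM c (\<theta> (xs[s := brD x (xs ! s)] @ a # ys))" for s
    using FlD[OF L upd_D[OF xs x] ys a] .
  have 2: "\<theta> (xs @ smulD sA sM c a # ys[s := brD x (ys ! s)]) = sM c (\<theta> (xs @ a # ys[s := brD x (ys ! s)]))" for s
    using FlD[OF L xs upd_D[OF ys x] a] .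
  have 3: "\<theta> (xs @ brD x (smulD sA sM c a) # ys) = sM c (\<theta> (xs @ brD x a # ys))"
    using brD_smulD_right[OF x a] FlD[OF L xs ys xa] by simp
  show "Lx x \<theta> (xs @ smulD sA sM c a # ys) = sM c (Lx x \<theta> (xs @ a # ys))"
    unfolding Lx_split[OF xs ys ga] Lx_split[OF xs ys a]
    by (simp add: 1 2 3 FlD[OF L xs ys a] D_props(2)[OF x] M.scale_sum_right M.scale_right_diff_distrib M.scale_right_distrib)
qed

end



context AM begin

definition DS where
  "DS \<theta> xs = (\<Sum>r<length xs. sM ((-1) ^ r) (fst (xs ! r) (\<theta> (omit {r} xs)))) +
          (\<Sum>s<length xs. \<Sum>r<s. sM ((-1) ^ (r + s)) (\<theta> (brD (xs ! r) (xs ! s) # omit {r, s} xs)))"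
definition Dc where "Dc \<theta> = (\<lambda>xs. if xs \<noteq> [] \<and> set xs \<subseteq> D then DS \<theta> xs else 0)"

lemma dOp_Dc: "dOp sA sM act \<theta> = (\<lambda>xs. sM (1 / of_nat (length xs)) (Dc \<theta> xs))"
  unfolding dOp_def Dc_def DS_def by (auto simp: fun_eq_iff)

lemma Dc_DS: "set xs \<subseteq> D \<Longrightarrow> Dc \<theta> xs = DS \<theta> xs"
  unfolding Dc_def DS_def by auto

lemma nth_D: "set xs \<subseteq> D \<Longrightarrow> r < length xs \<Longrightarrow> xs ! r \<in> D"
  using nth_mem by blast

lemma Dc_Van: assumes "Van n \<theta>" shows "Van (Suc n) (Dc \<theta>)"
  unfolding Van_def
proof (intro allI impI)
  fix xs assume h: "\<not> (length xs = Suc n \<and> set xs \<subseteq> D)"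
  show "Dc \<theta> xs = 0"
  proof (cases "xs \<noteq> [] \<and> set xs \<subseteq> D")
    case True
    then have len: "length xs \<noteq> Suc n" using h by auto
    have 1: "\<theta> (omit {r} xs) = 0" if "r < length xs" for r
    proof -
      have "length (omit {r} xs) \<noteq> n" using length_omit1[OF that] len True by (cases xs) auto
      then show ?thesis using VanD[OF assms] by blast
    qed
    have 2: "\<theta> (brD (xs ! r) (xs ! s) # omit {r, s} xs) = 0" if "r < s" "s < length xs" for r s
    proof -
      have "length (brD (xs ! r) (xs ! s) # omit {r, s} xs) \<noteq> n" using length_omit2[OF that] len that by auto
      then show ?thesis using VanD[OF assms] by blast
    qed
    show ?thesis unfolding Dc_def DS_def using True 1 2 nth_D[of xs] by simp
  qed (auto simp: Dc_def)
qed

lemma Dc_diff: "Dc (\<lambda>ys. f ys - g ys) = (\<lambda>ys. Dc f ys - Dc g ys)"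
proof -
  have "DS (\<lambda>ys. f ys - g ys) xs = DS f xs - DS g xs" if "set xs \<subseteq> D" for xs
    unfolding DS_def using nth_D[OF that]
    by (simp add: D_diff M.scale_right_diff_distrib sum_subtractf)
  then show ?thesis unfolding Dc_def by (auto simp: fun_eq_iff)
qed

lemma Dc_add: "Dc (\<lambda>ys. f ys + g ys) = (\<lambda>ys. Dc f ys + Dc g ys)"
proof -
  have "DS (\<lambda>ys. f ys + g ys) xs = DS f xs + DS g xs" if "set xs \<subseteq> D" for xs
    unfolding DS_def using nth_D[OF that]
    by (simp add: D_props(1) M.scale_right_distrib sum.distrib algebra_simps)
  then show ?thesis unfolding Dc_def by (auto simp: fun_eq_iff)
qed

lemma Dc_scale: "Dc (\<lambda>ys. sM c (f ys)) = (\<lambda>ys. sM c (Dc f ys))"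
proof -
  have "DS (\<lambda>ys. sM c (f ys)) xs = sM c (DS f xs)" if "set xs \<subseteq> D" for xs
    unfolding DS_def using nth_D[OF that]
    by (simp add: D_props(2) M.scale_right_distrib M.scale_sum_right M.scale_left_commute mult.commute)
  then show ?thesis unfolding Dc_def by (auto simp: fun_eq_iff)
qed

lemma Dc_zero: "Dc (\<lambda>_. 0) = (\<lambda>_. 0)"
  using Dc_scale[of 0 "\<lambda>_. 0"] by simp

lemma moving: assumes "Sw \<theta>" "set ys \<subseteq> D" "z \<in> D" "s < length ys"
  shows "\<theta> (z # omit {s} ys) = sM ((-1) ^ s) (\<theta> (ys[s := z]))"
  using assms
proof (induction s arbitrary: ys \<theta>)
  case 0
  then obtain y ys' where "ys = y # ys'" by (cases ys) auto
  then show ?case by simp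
next
  case (Suc s)
  then obtain y ys' where ys: "ys = y # ys'" by (cases ys) auto
  have y: "y \<in> D" and ys': "set ys' \<subseteq> D" using Suc.prems ys by auto
  have om: "set (omit {s} ys') \<subseteq> D" using order_trans[OF set_omit ys'] .
  have 1: "\<theta> (z # omit {Suc s} ys) = \<theta> ([] @ z # y # omit {s} ys')" using ys by simp
  have 2: "\<theta> ([] @ z # y # omit {s} ys') = - \<theta> ([] @ y # z # omit {s} ys')"
    using SwD[OF Suc.prems(1) _ om Suc.prems(3) y, of "[]"] by simp
  have 3: "\<theta> ([] @ y # z # omit {s} ys') = ix y \<theta> (z # omit {s} ys')" by (simp add: ix_def)
  have 4: "ix y \<theta> (z # omit {s} ys') = sM ((-1) ^ s) (ix y \<theta> (ys'[s := z]))"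
    using Suc.IH[OF ix_Sw[OF y Suc.prems(1)] ys' Suc.prems(3)] Suc.prems(4) ys by simp
  have 5: "\<theta> (ys[Suc s := z]) = ix y \<theta> (ys'[s := z])" using ys by (simp add: ix_def)
  show ?case unfolding 1 2 3 4 5 by simp
qed

lemma sgn_sq[simp]: "sM ((-1) ^ s) (sM ((-1) ^ s) v) = v"
  by (cases "even s") simp_all

end



context AM begin

lemma recursion: assumes S: "Sw \<theta>" and x: "x \<in> D" and xs: "set xs \<subseteq> D"
  shows "Dc \<theta> (x # xs) = Lx x \<theta> xs - Dc (ix x \<theta>) xs"
proof -
  have xD: "set (x # xs) \<subseteq> D" using x xs by simp
  have S1: "(\<Sum>r<length (x # xs). sM ((-1) ^ r) (fst ((x # xs) ! r) (\<theta> (omit {r} (x # xs))))) =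
      fst x (\<theta> xs) - (\<Sum>r<length xs. sM ((-1) ^ r) (fst (xs ! r) (\<theta> (x # omit {r} xs))))"
    by (simp add: sum.lessThan_Suc_shift sum_negf del: sum.lessThan_Suc)
  have S2: "(\<Sum>s<length (x # xs). \<Sum>r<s. sM ((-1) ^ (r + s)) (\<theta> (brD ((x # xs) ! r) ((x # xs) ! s) # omit {r, s} (x # xs)))) =
      (\<Sum>s<length xs. - sM ((-1) ^ s) (\<theta> (brD x (xs ! s) # omit {s} xs)) +
          (\<Sum>r<s. sM ((-1) ^ (r + s)) (\<theta> (brD (xs ! r) (xs ! s) # x # omit {r, s} xs))))"
    by (simp add: sum.lessThan_Suc_shift del: sum.lessThan_Suc)
  have mv: "sM ((-1) ^ s) (\<theta> (brD x (xs ! s) # omit {s} xs)) = \<theta> (xs[s := brD x (xs ! s)])" if "s < length xs" for s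
  proof -
    have "brD x (xs ! s) \<in> D" using brD_D x nth_D[OF xs that] by blast
    then show ?thesis using moving[OF S xs _ that] by simp
  qed
  have sw: "\<theta> (brD (xs ! r) (xs ! s) # x # omit {r, s} xs) = - \<theta> (x # brD (xs ! r) (xs ! s) # omit {r, s} xs)"
    if "r < s" "s < length xs" for r s
  proof -
    have "brD (xs ! r) (xs ! s) \<in> D" using brD_D nth_D[OF xs] that by auto
    moreover have "set (omit {r, s} xs) \<subseteq> D" using order_trans[OF set_omit xs] .
    ultimately show ?thesis using SwD[OF S _ _ _ x, of "[]"] by simp
  qed
  have S2': "(\<Sum>s<length xs. - sM ((-1) ^ s) (\<theta> (brD x (xs ! s) # omit {s} xs)) +
          (\<Sum>r<s. sM ((-1) ^ (r + s)) (\<theta> (brD (xs ! r) (xs ! s) # x # omit {r, s} xs)))) =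
       - (\<Sum>s<length xs. \<theta> (xs[s := brD x (xs ! s)])) -
         (\<Sum>s<length xs. \<Sum>r<s. sM ((-1) ^ (r + s)) (\<theta> (x # brD (xs ! r) (xs ! s) # omit {r, s} xs)))"
  proof -
    have "(\<Sum>s<length xs. - sM ((-1) ^ s) (\<theta> (brD x (xs ! s) # omit {s} xs)) +
          (\<Sum>r<s. sM ((-1) ^ (r + s)) (\<theta> (brD (xs ! r) (xs ! s) # x # omit {r, s} xs)))) =
          (\<Sum>s<length xs. - \<theta> (xs[s := brD x (xs ! s)]) -
          (\<Sum>r<s. sM ((-1) ^ (r + s)) (\<theta> (x # brD (xs ! r) (xs ! s) # omit {r, s} xs))))"
      by (rule sum.cong) (simp_all add: mv sw sum_negf)
    then show ?thesis by (simp add: sum_subtractf sum_negf)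
  qed
  have DSix: "Dc (ix x \<theta>) xs = (\<Sum>r<length xs. sM ((-1) ^ r) (fst (xs ! r) (\<theta> (x # omit {r} xs)))) +
      (\<Sum>s<length xs. \<Sum>r<s. sM ((-1) ^ (r + s)) (\<theta> (x # brD (xs ! r) (xs ! s) # omit {r, s} xs)))"
    using Dc_DS[OF xs] by (simp add: DS_def ix_def)
  have Lx: "Lx x \<theta> xs = fst x (\<theta> xs) - (\<Sum>s<length xs. \<theta> (xs[s := brD x (xs ! s)]))"
    using xs by (simp add: Lx_def)
  show ?thesis
    unfolding Dc_DS[OF xD] DS_def S1 S2 S2' DSix Lx by (simp add: algebra_simps)
qed

end



context AM begin

lemma Dc_cong: assumes "\<And>ws. set ws \<subseteq> D \<Longrightarrow> f ws = g ws" shows "Dc f = Dc g"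
proof -
  have "DS f xs = DS g xs" if xs: "set xs \<subseteq> D" for xs
  proof -
    have o1: "set (omit {r} xs) \<subseteq> D" for r using order_trans[OF set_omit xs] .
    have o2: "set (brD (xs ! r) (xs ! s) # omit {r, s} xs) \<subseteq> D" if "r < s" "s < length xs" for r s
      using order_trans[OF set_omit xs] brD_D nth_D[OF xs] that by auto
    have e2: "f (brD (xs ! r) (xs ! s) # omit {r, s} xs) = g (brD (xs ! r) (xs ! s) # omit {r, s} xs)"
      if "r < s" "s < length xs" for r s using assms o2[OF that] by blast
    have "(\<Sum>s<length xs. \<Sum>r<s. sM ((-1) ^ (r + s)) (f (brD (xs ! r) (xs ! s) # omit {r, s} xs))) =
          (\<Sum>s<length xs. \<Sum>r<s. sM ((-1) ^ (r + s)) (g (brD (xs ! r) (xs ! s) # omit {r, s} xs)))"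
      by (rule sum.cong[OF refl], rule sum.cong[OF refl]) (simp add: e2)
    then show ?thesis unfolding DS_def using assms o1 by simp
  qed
  then show ?thesis unfolding Dc_def by (auto simp: fun_eq_iff)
qed

lemma Dc_zero': "(\<And>ws. set ws \<subseteq> D \<Longrightarrow> f ws = 0) \<Longrightarrow> Dc f = (\<lambda>_. 0)"
  using Dc_cong[of f "\<lambda>_. 0"] Dc_zero by simp

lemma rec_fun: assumes "Sw \<theta>" "x \<in> D"
  shows "ix x (Dc \<theta>) = (\<lambda>ys. Lx x \<theta> ys - Dc (ix x \<theta>) ys)"
proof
  fix ys show "ix x (Dc \<theta>) ys = Lx x \<theta> ys - Dc (ix x \<theta>) ys"
  proof (cases "set ys \<subseteq> D")
    case True then show ?thesis using recursion[OF assms True] by (simp add: ix_def)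
  qed (simp add: ix_def Dc_def Lx_def)
qed

lemma Lx_Cons: assumes "y \<in> D" "set zs \<subseteq> D"
  shows "Lx x \<psi> (y # zs) = Lx x (ix y \<psi>) zs - \<psi> (brD x y # zs)"
  using assms unfolding Lx_def ix_def by (simp add: sum.lessThan_Suc_shift del: sum.lessThan_Suc)

lemma Dc_single: assumes "Sw \<theta>" "a \<in> D" shows "Dc \<theta> [a] = fst a (\<theta> [])"
  using recursion[OF assms, of "[]"] by (simp add: Lx_def Dc_def)

lemma Sw_step: assumes S: "Sw \<theta>" and A: "Ad \<theta>"
  and IH: "\<And>x. x \<in> D \<Longrightarrow> Sw (Dc (ix x \<theta>))"
  shows "Sw (Dc \<theta>)"
  unfolding Sw_def
proof (intro allI impI)
  fix xs ys a b assume xs: "set xs \<subseteq> D" and ys: "set ys \<subseteq> D" and a: "a \<in> D" and b: "b \<in> D"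
  show "Dc \<theta> (xs @ a # b # ys) = - Dc \<theta> (xs @ b # a # ys)"
  proof (cases xs)
    case (Cons w xs')
    have w: "w \<in> D" and xs': "set xs' \<subseteq> D" using xs Cons by auto
    have l1: "set (xs' @ a # b # ys) \<subseteq> D" "set (xs' @ b # a # ys) \<subseteq> D" using xs' ys a b by auto
    show ?thesis unfolding Cons append_Cons recursion[OF S w l1(1)] recursion[OF S w l1(2)]
      using SwD[OF Lx_Sw[OF w S] xs' ys a b] SwD[OF IH[OF w] xs' ys a b] by simp
  next
    case Nil
    have ab: "brD a b \<in> D" "brD b a \<in> D" using brD_D a b by auto
    have e: "Dc \<theta> (c # d # ys) = Lx c (ix d \<theta>) ys - \<theta> (brD c d # ys) - Lx d (ix c \<theta>) ys + Dc (ix d (ix c \<theta>)) ys"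
      if c: "c \<in> D" and d: "d \<in> D" for c d
    proof -
      have "Dc \<theta> (c # d # ys) = Lx c \<theta> (d # ys) - Dc (ix c \<theta>) (d # ys)"
        using recursion[OF S c] d ys by simp
      also have "Dc (ix c \<theta>) (d # ys) = Lx d (ix c \<theta>) ys - Dc (ix d (ix c \<theta>)) ys"
        using recursion[OF ix_Sw[OF c S] d ys] .
      also have "Lx c \<theta> (d # ys) = Lx c (ix d \<theta>) ys - \<theta> (brD c d # ys)"
        using Lx_Cons[OF d ys] .
      finally show ?thesis by (simp add: algebra_simps)
    qed
    have z: "\<theta> (brD a b # ys) + \<theta> (brD b a # ys) = 0"
      using AdD[OF A _ ys ab, of "[]"] Ad_Z0[OF A _ ys, of "[]"] brD_anti[of a b] by simp
    have dz: "Dc (ix b (ix a \<theta>)) ys + Dc (ix a (ix b \<theta>)) ys = 0"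
    proof -
      have "Dc (\<lambda>ws. ix b (ix a \<theta>) ws + ix a (ix b \<theta>) ws) = (\<lambda>_. 0)"
        by (rule Dc_zero') (use SwD[OF S _ _ a b, of "[]"] in \<open>simp add: ix_def\<close>)
      then show ?thesis using Dc_add[of "ix b (ix a \<theta>)" "ix a (ix b \<theta>)"] by (metis)
    qed
    show ?thesis unfolding Nil append_Nil e[OF a b] e[OF b a]
      using z dz by (simp add: algebra_simps eq_neg_iff_add_eq_0)
  qed
qed

end



context AM begin

lemma Ad_step: assumes S: "Sw \<theta>" and A: "Ad \<theta>"
  and IH: "\<And>x. x \<in> D \<Longrightarrow> Ad (Dc (ix x \<theta>))" and SD: "Sw (Dc \<theta>)"
  shows "Ad (Dc \<theta>)"
proof -
  have C: "Dc \<theta> (w # xs' @ addD a b # ys) = Dc \<theta> (w # xs' @ a # ys) + Dc \<theta> (w # xs' @ b # ys)"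
    if w: "w \<in> D" and xs': "set xs' \<subseteq> D" and ys: "set ys \<subseteq> D" and a: "a \<in> D" and b: "b \<in> D" for w xs' ys a b
  proof -
    have l: "set (xs' @ addD a b # ys) \<subseteq> D" "set (xs' @ a # ys) \<subseteq> D" "set (xs' @ b # ys) \<subseteq> D"
      using xs' ys a b addD_D by auto
    show ?thesis unfolding recursion[OF S w l(1)] recursion[OF S w l(2)] recursion[OF S w l(3)]
      using AdD[OF Lx_Ad[OF w A] xs' ys a b] AdD[OF IH[OF w] xs' ys a b] by (simp add: algebra_simps)
  qed
  show ?thesis unfolding Ad_def
  proof (intro allI impI)
    fix xs ys a b assume xs: "set xs \<subseteq> D" and ys: "set ys \<subseteq> D" and a: "a \<in> D" and b: "b \<in> D"
    have ab: "addD a b \<in> D" using addD_D a b by blast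
    show "Dc \<theta> (xs @ addD a b # ys) = Dc \<theta> (xs @ a # ys) + Dc \<theta> (xs @ b # ys)"
    proof (cases xs)
      case (Cons w xs')
      then show ?thesis using C[of w xs' ys a b] xs ys a b by simp
    next
      case Nil
      show ?thesis
      proof (cases ys)
        case Nil2: Nil
        show ?thesis unfolding Nil Nil2 using Dc_single[OF S] a b ab
          by (simp add: addD_def)
      next
        case (Cons y ys')
        have y: "y \<in> D" and ys': "set ys' \<subseteq> D" using ys Cons by auto
        have sw: "Dc \<theta> (c # y # ys') = - Dc \<theta> (y # [] @ c # ys')" if "c \<in> D" for c
          using SwD[OF SD _ ys' that y, of "[]"] by simp
        show ?thesis unfolding Nil Cons append_Nil sw[OF ab] sw[OF a] sw[OF b]
          using C[OF y _ ys' a b, of "[]"] by simp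
      qed
    qed
  qed
qed

lemma Al_step: assumes S: "Sw \<theta>" and A: "Ad \<theta>" and L: "Al \<theta>"
  and IH: "\<And>x. x \<in> D \<Longrightarrow> Al (Dc (ix x \<theta>))" and SD: "Sw (Dc \<theta>)"
  shows "Al (Dc \<theta>)"
proof -
  have C: "Dc \<theta> (w # xs' @ actD act g a # ys) = act g (Dc \<theta> (w # xs' @ a # ys))"
    if w: "w \<in> D" and xs': "set xs' \<subseteq> D" and ys: "set ys \<subseteq> D" and a: "a \<in> D" for w xs' ys a g
  proof -
    have l: "set (xs' @ actD act g a # ys) \<subseteq> D" "set (xs' @ a # ys) \<subseteq> D"
      using xs' ys a actD_D by auto
    show ?thesis unfolding recursion[OF S w l(1)] recursion[OF S w l(2)]
      using AlD[OF Lx_Al[OF w A L] xs' ys a] AlD[OF IH[OF w] xs' ys a] by (simp add: act_diff2)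
  qed
  show ?thesis unfolding Al_def
  proof (intro allI impI)
    fix xs ys a g assume xs: "set xs \<subseteq> D" and ys: "set ys \<subseteq> D" and a: "a \<in> D"
    have ab: "actD act g a \<in> D" using actD_D a by blast
    show "Dc \<theta> (xs @ actD act g a # ys) = act g (Dc \<theta> (xs @ a # ys))"
    proof (cases xs)
      case (Cons w xs')
      then show ?thesis using C[of w xs' ys a g] xs ys a by simp
    next
      case Nil
      show ?thesis
      proof (cases ys)
        case Nil2: Nil
        show ?thesis unfolding Nil Nil2 using Dc_single[OF S] a ab
          by (simp add: actD_def)
      next
        case (Cons y ys')
        have y: "y \<in> D" and ys': "set ys' \<subseteq> D" using ys Cons by auto
        have sw: "Dc \<theta> (c # y # ys') = - Dc \<theta> (y # [] @ c # ys')" if "c \<in> D" for c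
          using SwD[OF SD _ ys' that y, of "[]"] by simp
        show ?thesis unfolding Nil Cons append_Nil sw[OF ab] sw[OF a]
          using C[OF y _ ys' a, of "[]"] by (simp add: act_minus2)
      qed
    qed
  qed
qed

lemma Fl_step: assumes S: "Sw \<theta>" and L: "Fl \<theta>"
  and IH: "\<And>x. x \<in> D \<Longrightarrow> Fl (Dc (ix x \<theta>))" and SD: "Sw (Dc \<theta>)"
  shows "Fl (Dc \<theta>)"
proof -
  have C: "Dc \<theta> (w # xs' @ smulD sA sM c a # ys) = sM c (Dc \<theta> (w # xs' @ a # ys))"
    if w: "w \<in> D" and xs': "set xs' \<subseteq> D" and ys: "set ys \<subseteq> D" and a: "a \<in> D" for w xs' ys a c
  proof -
    have l: "set (xs' @ smulD sA sM c a # ys) \<subseteq> D" "set (xs' @ a # ys) \<subseteq> D"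
      using xs' ys a smulD_D by auto
    show ?thesis unfolding recursion[OF S w l(1)] recursion[OF S w l(2)]
      using FlD[OF Lx_Fl[OF w L] xs' ys a] FlD[OF IH[OF w] xs' ys a] by (simp add: M.scale_right_diff_distrib)
  qed
  show ?thesis unfolding Fl_def
  proof (intro allI impI)
    fix xs ys a c assume xs: "set xs \<subseteq> D" and ys: "set ys \<subseteq> D" and a: "a \<in> D"
    have ab: "smulD sA sM c a \<in> D" using smulD_D a by blast
    show "Dc \<theta> (xs @ smulD sA sM c a # ys) = sM c (Dc \<theta> (xs @ a # ys))"
    proof (cases xs)
      case (Cons w xs')
      then show ?thesis using C[of w xs' ys a c] xs ys a by simp
    next
      case Nil
      show ?thesis
      proof (cases ys)
        case Nil2: Nil
        show ?thesis unfolding Nil Nil2 using Dc_single[OF S] a ab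
          by (simp add: smulD_def)
      next
        case (Cons y ys')
        have y: "y \<in> D" and ys': "set ys' \<subseteq> D" using ys Cons by auto
        have sw: "Dc \<theta> (d # y # ys') = - Dc \<theta> (y # [] @ d # ys')" if "d \<in> D" for d
          using SwD[OF SD _ ys' that y, of "[]"] by simp
        show ?thesis unfolding Nil Cons append_Nil sw[OF ab] sw[OF a]
          using C[OF y _ ys' a, of "[]"] by simp
      qed
    qed
  qed
qed

definition Pf where "Pf n \<theta> \<longleftrightarrow> Van n \<theta> \<and> Ad \<theta> \<and> Sw \<theta>"

lemma zero_props: "Ad (\<lambda>_. 0)" "Sw (\<lambda>_. 0)" "Al (\<lambda>_. 0)" "Fl (\<lambda>_. 0)" "Van n (\<lambda>_. 0)"
  unfolding Ad_def Sw_def Al_def Fl_def Van_def by auto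

lemma ix_Pf: "x \<in> D \<Longrightarrow> Pf (Suc n) \<theta> \<Longrightarrow> Pf n (ix x \<theta>)"
  unfolding Pf_def using ix_Van ix_Ad ix_Sw by blast

lemma Dc_Pf: "Pf n \<theta> \<Longrightarrow> Pf (Suc n) (Dc \<theta>) \<and> (Al \<theta> \<longrightarrow> Al (Dc \<theta>)) \<and> (Fl \<theta> \<longrightarrow> Fl (Dc \<theta>))"
proof (induction n arbitrary: \<theta>)
  case 0
  then have P: "Van 0 \<theta>" "Ad \<theta>" "Sw \<theta>" unfolding Pf_def by auto
  have z: "ix x \<theta> = (\<lambda>_. 0)" for x using ix_zero[OF P(1)] .
  have SD: "Sw (Dc \<theta>)" by (rule Sw_step[OF P(3) P(2)]) (simp add: z Dc_zero zero_props)
  have AD: "Ad (Dc \<theta>)" by (rule Ad_step[OF P(3) P(2) _ SD]) (simp add: z Dc_zero zero_props)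
  show ?case unfolding Pf_def using SD AD Dc_Van[OF P(1)]
    Al_step[OF P(3) P(2) _ _ SD] Fl_step[OF P(3) _ _ SD] by (simp add: z Dc_zero zero_props)
next
  case (Suc n)
  then have P: "Van (Suc n) \<theta>" "Ad \<theta>" "Sw \<theta>" unfolding Pf_def by auto
  have IH: "Pf (Suc n) (Dc (ix x \<theta>))" "Al \<theta> \<Longrightarrow> Al (Dc (ix x \<theta>))" "Fl \<theta> \<Longrightarrow> Fl (Dc (ix x \<theta>))"
    if "x \<in> D" for x
    using Suc.IH[OF ix_Pf[OF that Suc.prems]] ix_Al[OF that] ix_Fl[OF that] by auto
  have SD: "Sw (Dc \<theta>)" by (rule Sw_step[OF P(3) P(2)]) (use IH(1) in \<open>simp add: Pf_def\<close>)
  have AD: "Ad (Dc \<theta>)" by (rule Ad_step[OF P(3) P(2) _ SD]) (use IH(1) in \<open>simp add: Pf_def\<close>)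
  show ?case unfolding Pf_def using SD AD Dc_Van[OF P(1)]
    Al_step[OF P(3) P(2) _ _ SD] Fl_step[OF P(3) _ _ SD] IH(2,3) by blast
qed

end



context AM begin

lemma Ad_upd: assumes A: "Ad \<theta>" and zs: "set zs \<subseteq> D" and s: "s < length zs" and a: "a \<in> D" and b: "b \<in> D"
  shows "\<theta> (zs[s := addD a b]) = \<theta> (zs[s := a]) + \<theta> (zs[s := b])"
proof -
  have t: "set (take s zs) \<subseteq> D" "set (drop (Suc s) zs) \<subseteq> D"
    using zs set_take_subset set_drop_subset by (metis order_trans)+
  show ?thesis using AdD[OF A t(1) t(2) a b] s by (simp add: upd_conv_take_nth_drop)
qed

lemma Lx_comm: assumes x: "x \<in> D" and y: "y \<in> D" and A: "Ad \<theta>" and zs: "set zs \<subseteq> D"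
  shows "Lx x (Lx y \<theta>) zs - Lx y (Lx x \<theta>) zs = Lx (brD x y) \<theta> zs"
proof -
  define n where "n = length zs"
  define W where "W p q s t = (zs[s := brD p (zs ! s)])[t := brD q ((zs[s := brD p (zs ! s)]) ! t)]" for p q s t
  have e1: "Lx p (Lx q \<theta>) zs = fst p (fst q (\<theta> zs)) - (\<Sum>t<n. fst p (\<theta> (zs[t := brD q (zs ! t)])))
     - (\<Sum>s<n. fst q (\<theta> (zs[s := brD p (zs ! s)]))) + (\<Sum>s<n. \<Sum>t<n. \<theta> (W p q s t))"
    if p: "p \<in> D" and q: "q \<in> D" for p q
  proof -
    have hs: "Lx q \<theta> (zs[s := brD p (zs ! s)]) = fst q (\<theta> (zs[s := brD p (zs ! s)])) - (\<Sum>t<n. \<theta> (W p q s t))" for s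
      using upd_D[OF zs p] unfolding Lx_def W_def n_def by simp
    have L: "Lx r \<psi> zs = fst r (\<psi> zs) - (\<Sum>s<n. \<psi> (zs[s := brD r (zs ! s)]))" for r \<psi>
      using zs unfolding Lx_def n_def by simp
    show ?thesis unfolding L[of p] L[of q] hs
      by (simp add: D_diff[OF p] D_sum[OF p] sum_subtractf algebra_simps)
  qed
  have diag: "(\<Sum>t<n. \<theta> (W x y s t) - \<theta> (W y x t s)) =
      \<theta> (zs[s := brD y (brD x (zs ! s))]) - \<theta> (zs[s := brD x (brD y (zs ! s))])" if s: "s < n" for s
  proof -
    have "(\<Sum>t<n. \<theta> (W x y s t) - \<theta> (W y x t s)) =
          (\<Sum>t<n. if t = s then \<theta> (zs[s := brD y (brD x (zs ! s))]) - \<theta> (zs[s := brD x (brD y (zs ! s))]) else 0)"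
    proof (rule sum.cong[OF refl])
      fix t assume "t \<in> {..<n}"
      show "\<theta> (W x y s t) - \<theta> (W y x t s) = (if t = s then \<theta> (zs[s := brD y (brD x (zs ! s))]) - \<theta> (zs[s := brD x (brD y (zs ! s))]) else 0)"
        using s unfolding W_def n_def by (auto simp: list_update_swap)
    qed
    also have "\<dots> = \<theta> (zs[s := brD y (brD x (zs ! s))]) - \<theta> (zs[s := brD x (brD y (zs ! s))])"
      using s by simp
    finally show ?thesis .
  qed
  have jac: "\<theta> (zs[s := brD y (brD x (zs ! s))]) - \<theta> (zs[s := brD x (brD y (zs ! s))]) = - \<theta> (zs[s := brD (brD x y) (zs ! s)])"
    if s: "s < n" for s
  proof -
    have zD: "zs ! s \<in> D" using nth_D[OF zs] s n_def by auto
    have d: "brD y (brD x (zs ! s)) \<in> D" "brD (brD x y) (zs ! s) \<in> D" using brD_D x y zD by auto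
    have "s < length zs" using s n_def by simp
    then show ?thesis unfolding jacobi[OF x y zD] using Ad_upd[OF A zs _ d] by simp
  qed
  have dd: "(\<Sum>s<n. \<Sum>t<n. \<theta> (W x y s t)) - (\<Sum>s<n. \<Sum>t<n. \<theta> (W y x s t)) = - (\<Sum>s<n. \<theta> (zs[s := brD (brD x y) (zs ! s)]))"
  proof -
    have "(\<Sum>s<n. \<Sum>t<n. \<theta> (W y x s t)) = (\<Sum>s<n. \<Sum>t<n. \<theta> (W y x t s))" by (rule sum.swap)
    then have "(\<Sum>s<n. \<Sum>t<n. \<theta> (W x y s t)) - (\<Sum>s<n. \<Sum>t<n. \<theta> (W y x s t)) = (\<Sum>s<n. \<Sum>t<n. \<theta> (W x y s t) - \<theta> (W y x t s))"
      by (simp add: sum_subtractf)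
    also have "\<dots> = (\<Sum>s<n. - \<theta> (zs[s := brD (brD x y) (zs ! s)]))"
      by (rule sum.cong[OF refl]) (simp add: diag jac)
    finally show ?thesis by (simp add: sum_negf)
  qed
  have "fst (brD x y) = (\<lambda>m. fst x (fst y m) - fst y (fst x m))" unfolding brD_def by simp
  then show ?thesis unfolding e1[OF x y] e1[OF y x] using zs dd unfolding Lx_def n_def
    by (simp add: algebra_simps)
qed

end



context AM begin

lemma Lx_Pf: "x \<in> D \<Longrightarrow> Pf n \<theta> \<Longrightarrow> Pf n (Lx x \<theta>)"
  unfolding Pf_def using Lx_Van Lx_Ad Lx_Sw by blast

lemma C_step: assumes P: "Pf n \<theta>" and x: "x \<in> D"
  and H: "\<And>y x. y \<in> D \<Longrightarrow> x \<in> D \<Longrightarrow> Dc (Lx x (ix y \<theta>)) = Lx x (Dc (ix y \<theta>))"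
  shows "Dc (Lx x \<theta>) = Lx x (Dc \<theta>)"
proof
  fix ys
  have S: "Sw \<theta>" and A: "Ad \<theta>" using P unfolding Pf_def by auto
  show "Dc (Lx x \<theta>) ys = Lx x (Dc \<theta>) ys"
  proof (cases "set ys \<subseteq> D")
    case False then show ?thesis by (simp add: Dc_def Lx_def)
  next
    case True
    show ?thesis
    proof (cases ys)
      case Nil then show ?thesis using x by (simp add: Dc_def Lx_def)
    next
      case (Cons y zs)
      have y: "y \<in> D" and zs: "set zs \<subseteq> D" using True Cons by auto
      have xy: "brD x y \<in> D" using brD_D x y by blast
      have SL: "Sw (Lx x \<theta>)" using Lx_Sw[OF x S] .
      have 1: "Dc (ix y (Lx x \<theta>)) = (\<lambda>ws. Dc (Lx x (ix y \<theta>)) ws - Dc (ix (brD x y) \<theta>) ws)"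
      proof -
        have "Dc (ix y (Lx x \<theta>)) = Dc (\<lambda>ws. Lx x (ix y \<theta>) ws - ix (brD x y) \<theta> ws)"
          by (rule Dc_cong) (simp add: ix_def Lx_Cons[OF y])
        then show ?thesis by (simp add: Dc_diff)
      qed
      have 2: "Lx x (ix y (Dc \<theta>)) = (\<lambda>ws. Lx x (Lx y \<theta>) ws - Lx x (Dc (ix y \<theta>)) ws)"
        unfolding rec_fun[OF S y] Lx_diff[OF x] ..
      have "Dc (Lx x \<theta>) (y # zs) = Lx y (Lx x \<theta>) zs - Dc (ix y (Lx x \<theta>)) zs"
        using recursion[OF SL y zs] .
      also have "\<dots> = Lx y (Lx x \<theta>) zs - Lx x (Dc (ix y \<theta>)) zs + Dc (ix (brD x y) \<theta>) zs"
        unfolding 1 H[OF y x] by simp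
      finally have L: "Dc (Lx x \<theta>) (y # zs) = Lx y (Lx x \<theta>) zs - Lx x (Dc (ix y \<theta>)) zs + Dc (ix (brD x y) \<theta>) zs" .
      have R: "Lx x (Dc \<theta>) (y # zs) = Lx x (Lx y \<theta>) zs - Lx x (Dc (ix y \<theta>)) zs - (Lx (brD x y) \<theta> zs - Dc (ix (brD x y) \<theta>) zs)"
        unfolding Lx_Cons[OF y zs] 2 recursion[OF S xy zs] ..
      show ?thesis unfolding Cons L R using Lx_comm[OF x y A zs] by (simp add: algebra_simps)
    qed
  qed
qed

lemma C_all: "Pf n \<theta> \<Longrightarrow> x \<in> D \<Longrightarrow> Dc (Lx x \<theta>) = Lx x (Dc \<theta>)"
proof (induction n arbitrary: \<theta> x)
  case 0
  then have "ix y \<theta> = (\<lambda>_. 0)" for y using ix_zero unfolding Pf_def by blast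
  then show ?case using C_step[OF 0(1) 0(2)] by (simp add: Dc_zero Lx_zero)
next
  case (Suc n)
  show ?case using C_step[OF Suc.prems] Suc.IH ix_Pf[OF _ Suc.prems(1)] by blast
qed

lemma Z_all: "Pf n \<theta> \<Longrightarrow> Dc (Dc \<theta>) = (\<lambda>_. 0)"
proof (induction n arbitrary: \<theta>)
  case (0 \<theta>) note P = this
  have z: "ix y \<theta> = (\<lambda>_. 0)" for y using ix_zero P unfolding Pf_def by blast
  show ?case
  proof
    fix ys
    have S: "Sw \<theta>" using P unfolding Pf_def by auto
    have SD: "Sw (Dc \<theta>)" using Dc_Pf[OF P] unfolding Pf_def by auto
    show "Dc (Dc \<theta>) ys = 0"
    proof (cases "ys \<noteq> [] \<and> set ys \<subseteq> D")
      case False then show ?thesis by (auto simp: Dc_def)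
    next
      case True
      then obtain y zs where ys: "ys = y # zs" by (cases ys) auto
      have y: "y \<in> D" and zs: "set zs \<subseteq> D" using True ys by auto
      show ?thesis unfolding ys recursion[OF SD y zs] rec_fun[OF S y]
        by (simp add: Dc_diff z Dc_zero C_all[OF P y])
    qed
  qed
next
  case (Suc n \<theta>) note P = Suc.prems
  show ?case
  proof
    fix ys
    have S: "Sw \<theta>" using P unfolding Pf_def by auto
    have SD: "Sw (Dc \<theta>)" using Dc_Pf[OF P] unfolding Pf_def by auto
    show "Dc (Dc \<theta>) ys = 0"
    proof (cases "ys \<noteq> [] \<and> set ys \<subseteq> D")
      case False then show ?thesis by (auto simp: Dc_def)
    next
      case True
      then obtain y zs where ys: "ys = y # zs" by (cases ys) auto
      have y: "y \<in> D" and zs: "set zs \<subseteq> D" using True ys by auto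
      show ?thesis unfolding ys recursion[OF SD y zs] rec_fun[OF S y]
        by (simp add: Dc_diff Suc.IH[OF ix_Pf[OF y P]] C_all[OF P y])
    qed
  qed
qed

end



context AM begin

definition Alt where "Alt \<theta> \<longleftrightarrow> (\<forall>xs i j. set xs \<subseteq> D \<and> i < j \<and> j < length xs \<and> xs ! i = xs ! j \<longrightarrow> \<theta> xs = 0)"

definition OM where "OM n \<theta> \<longleftrightarrow> Van n \<theta> \<and> Ad \<theta> \<and> Al \<theta> \<and> Fl \<theta> \<and> Alt \<theta>"

lemma Omega_neg: "q < 0 \<Longrightarrow> Omega sA sM act q = {\<lambda>_. 0}"
  unfolding Omega_def by simp

lemma Omega_OM: assumes "0 \<le> q" shows "\<theta> \<in> Omega sA sM act q \<longleftrightarrow> OM (nat q) \<theta>"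
proof
  assume h: "\<theta> \<in> Omega sA sM act q"
  let ?n = "nat q"
  have H: "(\<forall>xs. \<not> (length xs = ?n \<and> set xs \<subseteq> D) \<longrightarrow> \<theta> xs = 0) \<and>
          (\<forall>xs ys \<xi> \<eta>. length xs + length ys + 1 = ?n \<and> set xs \<subseteq> D \<and> set ys \<subseteq> D \<and> \<xi> \<in> D \<and> \<eta> \<in> D \<longrightarrow>
              \<theta> (xs @ addD \<xi> \<eta> # ys) = \<theta> (xs @ \<xi> # ys) + \<theta> (xs @ \<eta> # ys)) \<and>
          (\<forall>xs ys \<xi> g. length xs + length ys + 1 = ?n \<and> set xs \<subseteq> D \<and> set ys \<subseteq> D \<and> \<xi> \<in> D \<longrightarrow>
              \<theta> (xs @ actD act g \<xi> # ys) = act g (\<theta> (xs @ \<xi> # ys))) \<and>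
          (\<forall>xs ys \<xi> c. length xs + length ys + 1 = ?n \<and> set xs \<subseteq> D \<and> set ys \<subseteq> D \<and> \<xi> \<in> D \<longrightarrow>
              \<theta> (xs @ smulD sA sM c \<xi> # ys) = sM c (\<theta> (xs @ \<xi> # ys))) \<and>
          (\<forall>xs i j. length xs = ?n \<and> set xs \<subseteq> D \<and> i < j \<and> j < length xs \<and> xs ! i = xs ! j \<longrightarrow>
              \<theta> xs = 0)"
  proof -
    have nq: "\<not> q < 0" using assms by simp
    show ?thesis using h unfolding Omega_def Let_def if_not_P[OF nq] mem_Collect_eq .
  qed
  have V: "Van ?n \<theta>" using H unfolding Van_def by blast
  note h2 = H[THEN conjunct2, THEN conjunct1, rule_format]
     H[THEN conjunct2, THEN conjunct2, THEN conjunct1, rule_format]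
     H[THEN conjunct2, THEN conjunct2, THEN conjunct2, THEN conjunct1, rule_format]
     H[THEN conjunct2, THEN conjunct2, THEN conjunct2, THEN conjunct2, rule_format]
  have A: "Ad \<theta>" unfolding Ad_def
  proof (intro allI impI)
    fix xs ys a b assume xs: "set xs \<subseteq> D" and ys: "set ys \<subseteq> D" and a: "a \<in> D" and b: "b \<in> D"
    show "\<theta> (xs @ addD a b # ys) = \<theta> (xs @ a # ys) + \<theta> (xs @ b # ys)"
    proof (cases "length xs + length ys + 1 = ?n")
      case True then show ?thesis using h2(1) xs ys a b by simp
    next
      case False then show ?thesis using VanD[OF V] by simp
    qed
  qed
  have L: "Al \<theta>" unfolding Al_def
  proof (intro allI impI)
    fix xs ys a g assume xs: "set xs \<subseteq> D" and ys: "set ys \<subseteq> D" and a: "a \<in> D"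
    show "\<theta> (xs @ actD act g a # ys) = act g (\<theta> (xs @ a # ys))"
    proof (cases "length xs + length ys + 1 = ?n")
      case True then show ?thesis using h2(2) xs ys a by simp
    next
      case False then show ?thesis using VanD[OF V] by simp
    qed
  qed
  have F: "Fl \<theta>" unfolding Fl_def
  proof (intro allI impI)
    fix xs ys a c assume xs: "set xs \<subseteq> D" and ys: "set ys \<subseteq> D" and a: "a \<in> D"
    show "\<theta> (xs @ smulD sA sM c a # ys) = sM c (\<theta> (xs @ a # ys))"
    proof (cases "length xs + length ys + 1 = ?n")
      case True then show ?thesis using h2(3) xs ys a by simp
    next
      case False then show ?thesis using VanD[OF V] by simp
    qed
  qed
  have T: "Alt \<theta>" unfolding Alt_def
  proof (intro allI impI)
    fix xs i j assume "set xs \<subseteq> D \<and> i < j \<and> j < length xs \<and> xs ! i = xs ! j"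
    then show "\<theta> xs = 0" using h2(4)[of xs i j] VanD[OF V, of xs] by auto
  qed
  show "OM ?n \<theta>" unfolding OM_def using V A L F T by blast
next
  assume "OM (nat q) \<theta>"
  then have V: "Van (nat q) \<theta>" and A: "Ad \<theta>" and L: "Al \<theta>" and F: "Fl \<theta>" and T: "Alt \<theta>"
    unfolding OM_def by auto
  have nq: "\<not> q < 0" using assms by simp
  show "\<theta> \<in> Omega sA sM act q"
    unfolding Omega_def Let_def if_not_P[OF nq] mem_Collect_eq
    apply (intro conjI allI impI)
    subgoal using VanD[OF V] by blast
    subgoal using AdD[OF A] by blast
    subgoal using AlD[OF L] by blast
    subgoal using FlD[OF F] by blast
    subgoal using T unfolding Alt_def by blast
    done
qed

lemma char0: "v = - v \<Longrightarrow> v = (0 :: 'm)"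
proof -
  assume "v = - v"
  then have "v + v = 0" by (simp only: eq_neg_iff_add_eq_0)
  moreover have "sM (1 + 1) v = v + v" by (simp only: M.scale_left_distrib M.scale_one)
  ultimately have "sM 2 v = 0" by (simp only: one_add_one)
  then show "v = 0" by simp
qed

lemma Sw_gap: assumes S: "Sw \<theta>" and bs: "set bs \<subseteq> D" and cs: "set cs \<subseteq> D" and a: "a \<in> D"
  shows "set as \<subseteq> D \<Longrightarrow> \<theta> (as @ a # bs @ a # cs) = 0"
  using bs
proof (induction bs arbitrary: as)
  case Nil
  then show ?case using SwD[OF S Nil(1) cs a a] char0 by simp
next
  case (Cons b bs)
  have b: "b \<in> D" and bs: "set bs \<subseteq> D" using Cons.prems by auto
  have "\<theta> (as @ a # (b # bs) @ a # cs) = - \<theta> (as @ b # a # bs @ a # cs)"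
    using SwD[OF S Cons.prems(1) _ a b, of "bs @ a # cs"] bs cs a by simp
  also have "\<theta> (as @ b # a # bs @ a # cs) = \<theta> ((as @ [b]) @ a # bs @ a # cs)" by simp
  also have "\<dots> = 0" using Cons.IH[of "as @ [b]"] Cons.prems b bs by simp
  finally show ?case by simp
qed

lemma Sw_Alt: assumes S: "Sw \<theta>" shows "Alt \<theta>"
  unfolding Alt_def
proof (intro allI impI)
  fix xs i j assume h: "set xs \<subseteq> D \<and> i < j \<and> j < length xs \<and> xs ! i = xs ! j"
  then have ij: "i < j" "j < length xs" and xs: "set xs \<subseteq> D" and e: "xs ! i = xs ! j" by auto
  define bs where "bs = take (j - Suc i) (drop (Suc i) xs)"
  have d1: "drop i xs = xs ! i # drop (Suc i) xs" using ij by (simp add: Cons_nth_drop_Suc)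
  have d2: "drop (Suc i) xs = bs @ drop j xs"
  proof -
    have "drop (j - Suc i) (drop (Suc i) xs) = drop j xs" using ij by simp
    moreover have "drop (Suc i) xs = take (j - Suc i) (drop (Suc i) xs) @ drop (j - Suc i) (drop (Suc i) xs)"
      by (rule append_take_drop_id[symmetric])
    ultimately show ?thesis unfolding bs_def by simp
  qed
  have d3: "drop j xs = xs ! j # drop (Suc j) xs" using ij by (simp add: Cons_nth_drop_Suc)
  have "xs = take i xs @ drop i xs" by simp
  then have dec: "xs = take i xs @ xs ! i # bs @ xs ! i # drop (Suc j) xs"
    by (simp only: d1 d2 d3 e[symmetric])
  have s1: "set (take i xs) \<subseteq> D" "set (drop (Suc j) xs) \<subseteq> D"
    using order_trans[OF set_take_subset xs] order_trans[OF set_drop_subset xs] by auto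
  have s2: "set bs \<subseteq> D" unfolding bs_def using order_trans[OF set_take_subset order_trans[OF set_drop_subset xs]] .
  have a: "xs ! i \<in> D" using nth_D[OF xs] ij by simp
  show "\<theta> xs = 0" using Sw_gap[OF S s2 s1(2) a s1(1)] dec by simp
qed

lemma OM_Sw: assumes "OM n \<theta>" shows "Sw \<theta>"
  unfolding Sw_def
proof (intro allI impI)
  have A: "Ad \<theta>" and T: "Alt \<theta>" using assms unfolding OM_def by auto
  fix xs ys a b assume xs: "set xs \<subseteq> D" and ys: "set ys \<subseteq> D" and a: "a \<in> D" and b: "b \<in> D"
  have ab: "addD a b \<in> D" using addD_D a b by blast
  have alt: "\<theta> (xs @ c # c # ys) = 0" if "c \<in> D" for c
  proof -
    have "set (xs @ c # c # ys) \<subseteq> D" using xs ys that by simp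
    moreover have "(xs @ c # c # ys) ! length xs = c" "(xs @ c # c # ys) ! Suc (length xs) = c"
      by (simp_all add: nth_append)
    ultimately show ?thesis using T[unfolded Alt_def, rule_format, of "xs @ c # c # ys" "length xs" "Suc (length xs)"]
      by simp
  qed
  have e1: "\<theta> (xs @ addD a b # addD a b # ys) = \<theta> (xs @ a # addD a b # ys) + \<theta> (xs @ b # addD a b # ys)"
    using AdD[OF A xs _ a b, of "addD a b # ys"] ab ys by simp
  have e2: "\<theta> (xs @ c # addD a b # ys) = \<theta> (xs @ c # a # ys) + \<theta> (xs @ c # b # ys)" if "c \<in> D" for c
    using AdD[OF A _ ys a b, of "xs @ [c]"] xs that by simp
  show "\<theta> (xs @ a # b # ys) = - \<theta> (xs @ b # a # ys)"
    using alt[OF ab] e1 e2[OF a] e2[OF b] alt[OF a] alt[OF b] by (simp add: eq_neg_iff_add_eq_0)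
qed

end



context AM begin

definition sc where "sc c f = (\<lambda>xs. sM c (f xs))"

lemma sc_Van: "Van n f \<Longrightarrow> Van n (sc c f)"
  unfolding Van_def sc_def by simp
lemma sc_Ad: assumes h: "Ad f" shows "Ad (sc c f)"
  unfolding Ad_def
proof (intro allI impI)
  fix xs ys a b assume H: "set xs \<subseteq> D" "set ys \<subseteq> D" "a \<in> D" "b \<in> D"
  show "sc c f (xs @ addD a b # ys) = sc c f (xs @ a # ys) + sc c f (xs @ b # ys)"
    using AdD[OF h H] by (simp add: sc_def M.scale_right_distrib)
qed
lemma sc_Sw: assumes h: "Sw f" shows "Sw (sc c f)"
  unfolding Sw_def
proof (intro allI impI)
  fix xs ys a b assume H: "set xs \<subseteq> D" "set ys \<subseteq> D" "a \<in> D" "b \<in> D"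
  show "sc c f (xs @ a # b # ys) = - sc c f (xs @ b # a # ys)"
    using SwD[OF h H] by (simp add: sc_def)
qed
lemma sc_Al: assumes h: "Al f" shows "Al (sc c f)"
  unfolding Al_def
proof (intro allI impI)
  fix xs ys a g assume H: "set xs \<subseteq> D" "set ys \<subseteq> D" "a \<in> D"
  show "sc c f (xs @ actD act g a # ys) = act g (sc c f (xs @ a # ys))"
    using AlD[OF h H] by (simp add: sc_def act_sM)
qed
lemma sc_Fl: assumes h: "Fl f" shows "Fl (sc c f)"
  unfolding Fl_def
proof (intro allI impI)
  fix xs ys a d assume H: "set xs \<subseteq> D" "set ys \<subseteq> D" "a \<in> D"
  show "sc c f (xs @ smulD sA sM d a # ys) = sM d (sc c f (xs @ a # ys))"
    using FlD[OF h H] by (simp add: sc_def mult.commute)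
qed
lemmas sc_props = sc_Van sc_Ad sc_Sw sc_Al sc_Fl

lemma Alt_zero: "Alt (\<lambda>_. 0)" unfolding Alt_def by simp

lemma zero_Omega: "q \<le> 0 \<Longrightarrow> (\<lambda>_. 0) \<in> Omega sA sM act q"
proof (cases "q < 0")
  case True then show ?thesis by (simp add: Omega_neg)
next
  case False
  assume "q \<le> 0"
  then show ?thesis using False Omega_OM[of q] zero_props Alt_zero unfolding OM_def by auto
qed

lemma dOp_zero: "dOp sA sM act (\<lambda>_. 0) = (\<lambda>_. 0)"
  by (simp add: dOp_Dc Dc_zero)

lemma deg_scale: "Van m f \<Longrightarrow> (\<lambda>xs. sM (1 / of_nat (length xs)) (f xs)) = sc (1 / of_nat m) f"
  unfolding sc_def by (auto simp: fun_eq_iff Van_def)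

lemma dOp_sc: "Van n \<theta> \<Longrightarrow> dOp sA sM act \<theta> = sc (1 / of_nat (Suc n)) (Dc \<theta>)"
  unfolding dOp_Dc using deg_scale[OF Dc_Van] by blast

lemma OM_Pf: "OM n \<theta> \<Longrightarrow> Pf n \<theta> \<and> Al \<theta> \<and> Fl \<theta>"
  using OM_Sw unfolding OM_def Pf_def by blast

lemma Pf_OM: "Pf n \<theta> \<Longrightarrow> Al \<theta> \<Longrightarrow> Fl \<theta> \<Longrightarrow> OM n \<theta>"
  using Sw_Alt unfolding OM_def Pf_def by blast

lemma dd: assumes "\<theta> \<in> Omega sA sM act q" shows "dOp sA sM act (dOp sA sM act \<theta>) = (\<lambda>_. 0)"
proof (cases "q < 0")
  case True then show ?thesis using assms by (simp add: Omega_neg dOp_zero)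
next
  case False
  then have P: "Pf (nat q) \<theta>" using assms Omega_OM OM_Pf by simp
  then have V: "Van (nat q) \<theta>" unfolding Pf_def by simp
  have "dOp sA sM act (dOp sA sM act \<theta>) = dOp sA sM act (sc (1 / of_nat (Suc (nat q))) (Dc \<theta>))"
    using dOp_sc[OF V] by simp
  also have "\<dots> = (\<lambda>_. 0)" unfolding dOp_Dc sc_def Dc_scale Z_all[OF P] by simp
  finally show ?thesis .
qed

lemma dOp_Omega: assumes "\<theta> \<in> Omega sA sM act q" "0 \<le> q" shows "dOp sA sM act \<theta> \<in> Omega sA sM act (q + 1)"
proof -
  have "OM (nat q) \<theta>" using assms Omega_OM by simp
  then have P: "Pf (nat q) \<theta>" "Al \<theta>" "Fl \<theta>" using OM_Pf by auto
  have V: "Van (nat q) \<theta>" using P unfolding Pf_def by simp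
  have Q: "Pf (Suc (nat q)) (Dc \<theta>)" "Al (Dc \<theta>)" "Fl (Dc \<theta>)" using Dc_Pf[OF P(1)] P by auto
  have "OM (Suc (nat q)) (dOp sA sM act \<theta>)" unfolding dOp_sc[OF V]
    using Q sc_props Pf_OM unfolding Pf_def by simp
  moreover have "nat (q + 1) = Suc (nat q)" using assms by simp
  ultimately show ?thesis using Omega_OM[of "q + 1"] assms by simp
qed

lemma Lx_E: assumes A: "Ad \<theta>" and xs: "set xs \<subseteq> D" shows "Lx E \<theta> xs = \<theta> xs"
proof -
  have z: "\<theta> (xs[s := brD E (xs ! s)]) = 0" if "s < length xs" for s
  proof -
    have "brD E (xs ! s) = Z0" using brD_E nth_D[OF xs that] by simp
    moreover have "\<theta> (xs[s := Z0]) = 0"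
      using Ad_upd[OF A xs that Z0_D Z0_D] unfolding addD_def Z0_def by simp
    ultimately show ?thesis by simp
  qed
  show ?thesis using xs z unfolding Lx_def by (simp add: E_def)
qed

lemma closed_rep: assumes P: "Pf n \<theta>" and C: "Dc \<theta> = (\<lambda>_. 0)"
  shows "\<theta> = Dc (ix E \<theta>)"
proof
  fix xs
  have S: "Sw \<theta>" and A: "Ad \<theta>" and V: "Van n \<theta>" using P unfolding Pf_def by auto
  show "\<theta> xs = Dc (ix E \<theta>) xs"
  proof (cases "set xs \<subseteq> D")
    case True
    have "0 = Lx E \<theta> xs - Dc (ix E \<theta>) xs" using recursion[OF S E_D True] C by simp
    then show ?thesis using Lx_E[OF A True] by simp
  next
    case False then show ?thesis using VanD[OF V] by (simp add: Dc_def)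
  qed
qed

lemma main: "(\<forall>q \<omega>. \<omega> \<in> Omega sA sM act q \<longrightarrow> dOp sA sM act (dOp sA sM act \<omega>) = (\<lambda>_. 0)) \<and>
    (\<forall>q. {\<omega> \<in> Omega sA sM act q. dOp sA sM act \<omega> = (\<lambda>_. 0)} = dOp sA sM act ` Omega sA sM act (q - 1))"
proof (intro conjI allI impI)
  fix q \<omega> assume "\<omega> \<in> Omega sA sM act q"
  then show "dOp sA sM act (dOp sA sM act \<omega>) = (\<lambda>_. 0)" by (rule dd)
next
  fix q :: int
  show "{\<omega> \<in> Omega sA sM act q. dOp sA sM act \<omega> = (\<lambda>_. 0)} = dOp sA sM act ` Omega sA sM act (q - 1)"
  proof
    show "dOp sA sM act ` Omega sA sM act (q - 1) \<subseteq> {\<omega> \<in> Omega sA sM act q. dOp sA sM act \<omega> = (\<lambda>_. 0)}"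
    proof
      fix \<omega> assume "\<omega> \<in> dOp sA sM act ` Omega sA sM act (q - 1)"
      then obtain \<eta> where \<eta>: "\<eta> \<in> Omega sA sM act (q - 1)" and w: "\<omega> = dOp sA sM act \<eta>" by blast
      have "\<omega> \<in> Omega sA sM act q"
      proof (cases "q - 1 < 0")
        case True
        then have "\<eta> = (\<lambda>_. 0)" using \<eta> by (simp add: Omega_neg)
        then show ?thesis using w True zero_Omega[of q] by (simp add: dOp_zero)
      next
        case False
        then show ?thesis using dOp_Omega[OF \<eta>] w by simp
      qed
      moreover have "dOp sA sM act \<omega> = (\<lambda>_. 0)" using dd[OF \<eta>] w by simp
      ultimately show "\<omega> \<in> {\<omega> \<in> Omega sA sM act q. dOp sA sM act \<omega> = (\<lambda>_. 0)}" by simp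
    qed
  next
    show "{\<omega> \<in> Omega sA sM act q. dOp sA sM act \<omega> = (\<lambda>_. 0)} \<subseteq> dOp sA sM act ` Omega sA sM act (q - 1)"
    proof
      fix \<omega> assume "\<omega> \<in> {\<omega> \<in> Omega sA sM act q. dOp sA sM act \<omega> = (\<lambda>_. 0)}"
      then have w: "\<omega> \<in> Omega sA sM act q" and c: "dOp sA sM act \<omega> = (\<lambda>_. 0)" by auto
      show "\<omega> \<in> dOp sA sM act ` Omega sA sM act (q - 1)"
      proof (cases "q < 0")
        case True
        then have "\<omega> = dOp sA sM act (\<lambda>_. 0)" using w by (simp add: Omega_neg dOp_zero)
        moreover have "(\<lambda>_. 0) \<in> Omega sA sM act (q - 1)" using True by (simp add: Omega_neg)
        ultimately show ?thesis by blast
      next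
        case False
        define n where "n = nat q"
        have OMw: "OM n \<omega>" using w False Omega_OM n_def by simp
        then have P: "Pf n \<omega>" "Al \<omega>" "Fl \<omega>" using OM_Pf by auto
        have C: "Dc \<omega> = (\<lambda>_. 0)"
        proof
          fix xs show "Dc \<omega> xs = 0"
          proof (cases xs)
            case Nil then show ?thesis by (simp add: Dc_def)
          next
            case (Cons y ys)
            have "dOp sA sM act \<omega> xs = 0" using c by simp
            then have "sM (1 / of_nat (length xs)) (Dc \<omega> xs) = 0" by (simp only: dOp_Dc)
            moreover have "(1::'k) + of_nat (length ys) \<noteq> 0"
              using of_nat_neq_0[of "length ys", where 'a='k] by simp
            ultimately show ?thesis using Cons by simp
          qed
        qed
        have rep: "\<omega> = Dc (ix E \<omega>)" using closed_rep[OF P(1) C] .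
        show ?thesis
        proof (cases n)
          case 0
          then have "ix E \<omega> = (\<lambda>_. 0)" using ix_zero P(1) unfolding Pf_def by blast
          then have "\<omega> = dOp sA sM act (\<lambda>_. 0)" using rep by (simp add: Dc_zero dOp_zero)
          moreover have "(\<lambda>_. 0) \<in> Omega sA sM act (q - 1)" using 0 n_def False by (simp add: Omega_neg)
          ultimately show ?thesis by blast
        next
          case (Suc m)
          define \<eta> where "\<eta> = sc (of_nat n) (ix E \<omega>)"
          have Pi: "Pf m (ix E \<omega>)" using ix_Pf[OF E_D] P(1) Suc by simp
          have "OM m \<eta>" unfolding \<eta>_def
            using Pi ix_Al[OF E_D P(2)] ix_Fl[OF E_D P(3)] sc_props Pf_OM unfolding Pf_def by simp
          moreover have "nat (q - 1) = m" using Suc n_def False by simp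
          moreover have "0 \<le> q - 1" using Suc n_def False by simp
          ultimately have \<eta>O: "\<eta> \<in> Omega sA sM act (q - 1)" using Omega_OM[of "q - 1"] by simp
          have Vi: "Van m (ix E \<omega>)" using Pi unfolding Pf_def by simp
          have "dOp sA sM act \<eta> = sc (1 / of_nat (Suc m)) (Dc \<eta>)"
            using dOp_sc[OF sc_props(1)[OF Vi]] \<eta>_def by simp
          also have "\<dots> = Dc (ix E \<omega>)"
            unfolding \<eta>_def sc_def Dc_scale using Suc of_nat_neq_0[of m, where 'a='k] by simp
          finally have "\<omega> = dOp sA sM act \<eta>" using rep by simp
          then show ?thesis using \<eta>O by blast
        qed
      qed
    qed
  qed
qed

end

lemma main_real:
  fixes sA :: "real \<Rightarrow> 'a::comm_ring \<Rightarrow> 'a" and sM :: "real \<Rightarrow> 'm::ab_group_add \<Rightarrow> 'm"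
  assumes "F_algebra_module sA sM act"
  shows "(\<forall>q \<omega>. \<omega> \<in> Omega sA sM act q \<longrightarrow> dOp sA sM act (dOp sA sM act \<omega>) = (\<lambda>_. 0)) \<and>
    (\<forall>q. {\<omega> \<in> Omega sA sM act q. dOp sA sM act \<omega> = (\<lambda>_. 0)} = dOp sA sM act ` Omega sA sM act (q - 1))"
  by (rule AM.main) (simp add: AM_def assms)

lemma main_complex:
  fixes sA :: "complex \<Rightarrow> 'a::comm_ring \<Rightarrow> 'a" and sM :: "complex \<Rightarrow> 'm::ab_group_add \<Rightarrow> 'm"
  assumes "F_algebra_module sA sM act"
  shows "(\<forall>q \<omega>. \<omega> \<in> Omega sA sM act q \<longrightarrow> dOp sA sM act (dOp sA sM act \<omega>) = (\<lambda>_. 0)) \<and>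
    (\<forall>q. {\<omega> \<in> Omega sA sM act q. dOp sA sM act \<omega> = (\<lambda>_. 0)} = dOp sA sM act ` Omega sA sM act (q - 1))"
  by (rule AM.main) (simp add: AM_def assms)

theorem theorem8:
  shows "(\<forall>(sA :: real \<Rightarrow> 'a::comm_ring \<Rightarrow> 'a) (sM :: real \<Rightarrow> 'm::ab_group_add \<Rightarrow> 'm) act.
            F_algebra_module sA sM act \<longrightarrow>
              (\<forall>q \<omega>. \<omega> \<in> Omega sA sM act q \<longrightarrow> dOp sA sM act (dOp sA sM act \<omega>) = (\<lambda>_. 0)) \<and>
              (\<forall>q. {\<omega> \<in> Omega sA sM act q. dOp sA sM act \<omega> = (\<lambda>_. 0)}
                     = dOp sA sM act ` Omega sA sM act (q - 1))) \<and>
         (\<forall>(sA :: complex \<Rightarrow> 'a \<Rightarrow> 'a) (sM :: complex \<Rightarrow> 'm \<Rightarrow> 'm) act.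
            F_algebra_module sA sM act \<longrightarrow>
              (\<forall>q \<omega>. \<omega> \<in> Omega sA sM act q \<longrightarrow> dOp sA sM act (dOp sA sM act \<omega>) = (\<lambda>_. 0)) \<and>
              (\<forall>q. {\<omega> \<in> Omega sA sM act q. dOp sA sM act \<omega> = (\<lambda>_. 0)}
                     = dOp sA sM act ` Omega sA sM act (q - 1)))"
  apply (rule conjI)
   apply (intro allI impI)
   apply (erule main_real)
  apply (intro allI impI)
  apply (erule main_complex)
  done


end
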